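(* Let $\ell\ge2$, $\ell_1=\lfloor\ell/2\rfloor$. Let $A_1=\begin{pmatrix}0&\epsilon\alpha_1\\ \epsilon&0\end{pmatrix}$ and $A_2=\begin{pmatrix}0&\epsilon\alpha_2\\ \epsilon&0\end{pmatrix}$ in $\mathfrak g(\mathfrak o_{\ell_1})$ with $\mathrm{tt}(A_1)=\mathbf{cus}$ and $\mathrm{tt}(A_2)\in\{\mathbf{ss},\mathbf{sns}\}$, and fix Serre lifts $\tilde A_i=\begin{pmatrix}0&\epsilon\tilde\alpha_i\\ \epsilon&0\end{pmatrix}\in\mathfrak g(\mathfrak o_\ell)$. For $g\in\mathrm G(\mathfrak o_\ell)$ let $W_g$ be the set of double cosets $S_{A_1}hS_{A_2}$, $h\in\mathrm G(\mathfrak o_\ell)$, such that $\tilde A_1+g\tilde A_2g^{-1}$ and $\tilde A_1+h\tilde A_2h^{-1}$ are $\mathrm G(\mathfrak o_\ell)$-conjugate modulo $\pi^{\ell_1}$. Then $|W_g|=1$ for every $g\in\mathrm G(\mathfrak o_\ell)$.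
   Context: Let $\mathcal O$ be a complete discrete valuation ring with maximal ideal $\mathfrak p=\pi\mathcal O$ and finite residue field of odd characteristic and cardinality $q$. Let $\mathfrak O=\mathcal O[\vartheta]$ be the unramified quadratic extension, with $\vartheta^2\in\mathcal O^\times$ a non-square, and Galois involution $x\mapsto x^\circ$, $\vartheta^\circ=-\vartheta$. Let $\mathfrak o_k=\mathcal O/\mathfrak p^k$ and $\mathfrak O_k=\mathfrak O/\pi^k\mathfrak O$. $\mathrm G$ denotes either $\mathrm{GL}_2$ (so $\mathrm G(\mathfrak o_k)=\mathrm{GL}_2(\mathfrak o_k)$, $R_k=\mathfrak o_k$, $\epsilon=1$, $\mathfrak g(\mathfrak o_k)=M_2(\mathfrak o_k)$) or $\mathrm{GU}_2$ (so $\mathrm G(\mathfrak o_k)=\{A\in \mathrm{GL}_2(\mathfrak O_k): A^\star A=I\}$ where $(a_{ij})^\star=W(a_{ji}^\circ)W^{-1}$, $W=\begin{pmatrix}0&1\\1&0\end{pmatrix}$, $R_k=\mathfrak O_k$, $\epsilon=\vartheta$, $\mathfrak g(\mathfrak o_k)=\{A\in M_2(\mathfrak O_k):A+A^\star=0\}$). Let $\ell_2=\lceil\ell/2\rceil$, $K^{i}=\{I+\pi^iB\}\cap\mathrm G(\mathfrak o_\ell)$, and fix an additive character $\psi$ of $R_\ell$ nontrivial on $\pi^{\ell-1}\mathfrak o_\ell$. For $A\in\mathfrak g(\mathfrak o_{\ell_1})$, $\psi_A(I+\pi^{\ell_2}B)=\psi(\pi^{\ell_2}\mathrm{tr}(\tilde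 AB))$ ($\tilde A$ any lift) is a character of $K^{\ell_2}$ and $S_A$ is its stabilizer in $\mathrm G(\mathfrak o_\ell)$ under conjugation. A Serre lift keeps entries equal to $\epsilon$ or $0$ unchanged. Matrix types (up to $\mathrm G(\mathfrak o_{\ell_1})$-conjugacy): $\mathrm{tt}(A)=\mathbf{sns}$ if $A\sim\begin{pmatrix}x&\epsilon\pi\beta\\ \epsilon&x\end{pmatrix}$; $\mathbf{ss}$ if $A\sim\begin{pmatrix}x&\epsilon\delta\\ \epsilon&x\end{pmatrix}$ with $\delta$ a square unit (for $\mathrm{GL}_2$) resp. non-square unit (for $\mathrm{GU}_2$); $\mathbf{cus}$ if $A\sim\begin{pmatrix}x&\epsilon\sigma\\ \epsilon&x\end{pmatrix}$ with $\sigma$ a non-square unit (for $\mathrm{GL}_2$) resp. square unit (for $\mathrm{GU}_2$). *)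

theory Defs
  imports Complex_Main
begin

text \<open>The ambient type 'a plays the role of the unramified quadratic extension
  Oq = Ov[theta]; the set Ov is the complete DVR inside it.  Elements of
  o_k = Ov/p^k (resp. Oq_k) are represented by elements of Ov (resp. 'a), and
  equality in o_k is congruence modulo pi^k.\<close>

definition subring_of :: "'a::comm_ring_1 set \<Rightarrow> bool" where
  "subring_of Ov \<longleftrightarrow> 0 \<in> Ov \<and> 1 \<in> Ov \<and> (\<forall>x\<in>Ov. \<forall>y\<in>Ov. x + y \<in> Ov \<and> x - y \<in> Ov \<and> x * y \<in> Ov)"

definition unit_in :: "'a::comm_ring_1 set \<Rightarrow> 'a \<Rightarrow> bool" where
  "unit_in Ov u \<longleftrightarrow> u \<in> Ov \<and> (\<exists>v\<in>Ov. u * v = 1)"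

definition dvr_with_uniformizer :: "'a::idom set \<Rightarrow> 'a \<Rightarrow> bool" where
  "dvr_with_uniformizer Ov \<pi> \<longleftrightarrow> subring_of Ov \<and> \<pi> \<in> Ov \<and> \<pi> \<noteq> 0 \<and> \<not> unit_in Ov \<pi> \<and>
     (\<forall>x\<in>Ov. x \<noteq> 0 \<longrightarrow> (\<exists>u n. unit_in Ov u \<and> x = u * \<pi> ^ n))"

definition pi_adically_complete :: "'a::idom set \<Rightarrow> 'a \<Rightarrow> bool" where
  "pi_adically_complete Ov \<pi> \<longleftrightarrow>
     (\<forall>s::nat \<Rightarrow> 'a. (\<forall>n. s n \<in> Ov) \<longrightarrow>
        (\<forall>k. \<exists>N. \<forall>m\<ge>N. \<forall>n\<ge>N. \<pi> ^ k dvd (s m - s n)) \<longrightarrow>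
        (\<exists>L\<in>Ov. \<forall>k. \<exists>N. \<forall>n\<ge>N. \<pi> ^ k dvd (s n - L)))"

definition residue_field :: "'a::idom set \<Rightarrow> 'a \<Rightarrow> 'a set set" where
  "residue_field Ov \<pi> = (\<lambda>x. {y\<in>Ov. \<pi> dvd (y - x)}) ` Ov"

definition standing_setup :: "'a::idom set \<Rightarrow> 'a \<Rightarrow> 'a \<Rightarrow> ('a \<Rightarrow> 'a) \<Rightarrow> bool" where
  "standing_setup Ov \<pi> \<theta> gal \<longleftrightarrow>
     dvr_with_uniformizer Ov \<pi> \<and> pi_adically_complete Ov \<pi> \<and>
     finite (residue_field Ov \<pi>) \<and> \<not> \<pi> dvd 2 \<and>
     unit_in Ov (\<theta>^2) \<and> \<not> (\<exists>y\<in>Ov. y^2 = \<theta>^2) \<and>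
     (\<forall>x. \<exists>!ab. fst ab \<in> Ov \<and> snd ab \<in> Ov \<and> x = fst ab + snd ab * \<theta>) \<and>
     (\<forall>a\<in>Ov. \<forall>b\<in>Ov. gal (a + b * \<theta>) = a - b * \<theta>)"

datatype 'a m2 = M2 'a 'a 'a 'a  (* M2 a11 a12 a21 a22 *)

fun mmul :: "'a::comm_ring_1 m2 \<Rightarrow> 'a m2 \<Rightarrow> 'a m2" where
  "mmul (M2 a b c d) (M2 e f g h) = M2 (a*e+b*g) (a*f+b*h) (c*e+d*g) (c*f+d*h)"

fun madd :: "'a::comm_ring_1 m2 \<Rightarrow> 'a m2 \<Rightarrow> 'a m2" where
  "madd (M2 a b c d) (M2 e f g h) = M2 (a+e) (b+f) (c+g) (d+h)"

fun msmult :: "'a::comm_ring_1 \<Rightarrow> 'a m2 \<Rightarrow> 'a m2" where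
  "msmult s (M2 a b c d) = M2 (s*a) (s*b) (s*c) (s*d)"

definition mone :: "'a::comm_ring_1 m2" where "mone = M2 1 0 0 1"
definition mzero :: "'a::comm_ring_1 m2" where "mzero = M2 0 0 0 0"
definition Wmat :: "'a::comm_ring_1 m2" where "Wmat = M2 0 1 1 0"

fun mtrace :: "'a::comm_ring_1 m2 \<Rightarrow> 'a" where
  "mtrace (M2 a b c d) = a + d"

fun entries :: "'a m2 \<Rightarrow> 'a set" where
  "entries (M2 a b c d) = {a, b, c, d}"

fun galT :: "('a \<Rightarrow> 'a) \<Rightarrow> 'a m2 \<Rightarrow> 'a m2" where
  "galT gal (M2 a b c d) = M2 (gal a) (gal c) (gal b) (gal d)"

text \<open>A^star = W (gal A)^T W^{-1}; note W^{-1} = W.\<close>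
definition mstar :: "('a::comm_ring_1 \<Rightarrow> 'a) \<Rightarrow> 'a m2 \<Rightarrow> 'a m2" where
  "mstar gal A = mmul (mmul Wmat (galT gal A)) Wmat"

fun mcong :: "'a::comm_ring_1 \<Rightarrow> nat \<Rightarrow> 'a m2 \<Rightarrow> 'a m2 \<Rightarrow> bool" where
  "mcong \<pi> k (M2 a b c d) (M2 e f g h) \<longleftrightarrow>
     \<pi>^k dvd (a - e) \<and> \<pi>^k dvd (b - f) \<and> \<pi>^k dvd (c - g) \<and> \<pi>^k dvd (d - h)"

text \<open>The flag unitary selects G = GU_2 (True) or G = GL_2 (False).\<close>

definition Rset :: "bool \<Rightarrow> 'a set \<Rightarrow> 'a set" where
  "Rset unitary Ov = (if unitary then UNIV else Ov)"

definition eps :: "bool \<Rightarrow> 'a::comm_ring_1 \<Rightarrow> 'a" where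
  "eps unitary \<theta> = (if unitary then \<theta> else 1)"

definition Gset :: "bool \<Rightarrow> 'a::comm_ring_1 set \<Rightarrow> 'a \<Rightarrow> ('a \<Rightarrow> 'a) \<Rightarrow> nat \<Rightarrow> 'a m2 set" where
  "Gset unitary Ov \<pi> gal k =
     {g. entries g \<subseteq> Rset unitary Ov \<and>
         (\<exists>h. entries h \<subseteq> Rset unitary Ov \<and> mcong \<pi> k (mmul g h) mone \<and> mcong \<pi> k (mmul h g) mone) \<and>
         (unitary \<longrightarrow> mcong \<pi> k (mmul (mstar gal g) g) mone)}"

definition gset :: "bool \<Rightarrow> 'a::comm_ring_1 set \<Rightarrow> 'a \<Rightarrow> ('a \<Rightarrow> 'a) \<Rightarrow> nat \<Rightarrow> 'a m2 set" where
  "gset unitary Ov \<pi> gal k =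
     {A. entries A \<subseteq> Rset unitary Ov \<and> (unitary \<longrightarrow> mcong \<pi> k (madd A (mstar gal A)) mzero)}"

definition minv :: "bool \<Rightarrow> 'a::comm_ring_1 set \<Rightarrow> 'a \<Rightarrow> nat \<Rightarrow> 'a m2 \<Rightarrow> 'a m2" where
  "minv unitary Ov \<pi> k g = (SOME h. entries h \<subseteq> Rset unitary Ov \<and> mcong \<pi> k (mmul g h) mone)"

definition Kgrp :: "bool \<Rightarrow> 'a::comm_ring_1 set \<Rightarrow> 'a \<Rightarrow> ('a \<Rightarrow> 'a) \<Rightarrow> nat \<Rightarrow> nat \<Rightarrow> 'a m2 set" where
  "Kgrp unitary Ov \<pi> gal l i =
     {g \<in> Gset unitary Ov \<pi> gal l. \<exists>B. entries B \<subseteq> Rset unitary Ov \<and> mcong \<pi> l g (madd mone (msmult (\<pi>^i) B))}"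

definition ceil_half :: "nat \<Rightarrow> nat" where "ceil_half l = l - l div 2"
definition floor_half :: "nat \<Rightarrow> nat" where "floor_half l = l div 2"

text \<open>psi_A(I + pi^{l2} B) = psi(pi^{l2} tr(A B)), A a lift of an element of g(o_{l1}).\<close>
definition psiA :: "bool \<Rightarrow> 'a::comm_ring_1 set \<Rightarrow> 'a \<Rightarrow> nat \<Rightarrow> ('a \<Rightarrow> complex) \<Rightarrow> 'a m2 \<Rightarrow> 'a m2 \<Rightarrow> complex" where
  "psiA unitary Ov \<pi> l \<psi> A k =
     (let B = (SOME B. entries B \<subseteq> Rset unitary Ov \<and>
                 mcong \<pi> l k (madd mone (msmult (\<pi>^ceil_half l) B)))
      in \<psi> (\<pi>^ceil_half l * mtrace (mmul A B)))"

definition stabS :: "bool \<Rightarrow> 'a::comm_ring_1 set \<Rightarrow> 'a \<Rightarrow> ('a \<Rightarrow> 'a) \<Rightarrow> nat \<Rightarrow> ('a \<Rightarrow> complex) \<Rightarrow> 'a m2 \<Rightarrow> 'a m2 set" where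
  "stabS unitary Ov \<pi> gal l \<psi> A =
     {g \<in> Gset unitary Ov \<pi> gal l. \<forall>k \<in> Kgrp unitary Ov \<pi> gal l (ceil_half l).
        psiA unitary Ov \<pi> l \<psi> A (mmul (mmul g k) (minv unitary Ov \<pi> l g)) = psiA unitary Ov \<pi> l \<psi> A k}"

definition good_character :: "bool \<Rightarrow> 'a::comm_ring_1 set \<Rightarrow> 'a \<Rightarrow> nat \<Rightarrow> ('a \<Rightarrow> complex) \<Rightarrow> bool" where
  "good_character unitary Ov \<pi> l \<psi> \<longleftrightarrow>
     \<psi> 0 = 1 \<and>
     (\<forall>x\<in>Rset unitary Ov. \<forall>y\<in>Rset unitary Ov. \<psi> (x + y) = \<psi> x * \<psi> y) \<and>
     (\<forall>x\<in>Rset unitary Ov. \<forall>y\<in>Rset unitary Ov. \<pi>^l dvd (x - y) \<longrightarrow> \<psi> x = \<psi> y) \<and>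
     (\<exists>x\<in>Ov. \<psi> (\<pi>^(l-1) * x) \<noteq> 1)"

definition conjugate_in :: "bool \<Rightarrow> 'a::comm_ring_1 set \<Rightarrow> 'a \<Rightarrow> ('a \<Rightarrow> 'a) \<Rightarrow> nat \<Rightarrow> 'a m2 \<Rightarrow> 'a m2 \<Rightarrow> bool" where
  "conjugate_in unitary Ov \<pi> gal k A B \<longleftrightarrow>
     (\<exists>g \<in> Gset unitary Ov \<pi> gal k. mcong \<pi> k (mmul g A) (mmul B g))"

definition square_mod :: "'a::comm_ring_1 set \<Rightarrow> 'a \<Rightarrow> nat \<Rightarrow> 'a \<Rightarrow> bool" where
  "square_mod Ov \<pi> k x \<longleftrightarrow> (\<exists>y\<in>Ov. \<pi>^k dvd (x - y^2))"

text \<open>unit of o_k (k \<ge> 1): not divisible by pi.\<close>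
definition unit_mod :: "'a::comm_ring_1 set \<Rightarrow> 'a \<Rightarrow> 'a \<Rightarrow> bool" where
  "unit_mod Ov \<pi> x \<longleftrightarrow> x \<in> Ov \<and> \<not> \<pi> dvd x"

definition tt_sns :: "bool \<Rightarrow> 'a::comm_ring_1 set \<Rightarrow> 'a \<Rightarrow> 'a \<Rightarrow> ('a \<Rightarrow> 'a) \<Rightarrow> nat \<Rightarrow> 'a m2 \<Rightarrow> bool" where
  "tt_sns unitary Ov \<pi> \<theta> gal k A \<longleftrightarrow>
     (\<exists>x\<in>Rset unitary Ov. \<exists>\<beta>\<in>Ov. conjugate_in unitary Ov \<pi> gal k A
        (M2 x (eps unitary \<theta> * \<pi> * \<beta>) (eps unitary \<theta>) x))"

definition tt_ss :: "bool \<Rightarrow> 'a::comm_ring_1 set \<Rightarrow> 'a \<Rightarrow> 'a \<Rightarrow> ('a \<Rightarrow> 'a) \<Rightarrow> nat \<Rightarrow> 'a m2 \<Rightarrow> bool" where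
  "tt_ss unitary Ov \<pi> \<theta> gal k A \<longleftrightarrow>
     (\<exists>x\<in>Rset unitary Ov. \<exists>\<delta>. unit_mod Ov \<pi> \<delta> \<and>
        (if unitary then \<not> square_mod Ov \<pi> k \<delta> else square_mod Ov \<pi> k \<delta>) \<and>
        conjugate_in unitary Ov \<pi> gal k A (M2 x (eps unitary \<theta> * \<delta>) (eps unitary \<theta>) x))"

definition tt_cus :: "bool \<Rightarrow> 'a::comm_ring_1 set \<Rightarrow> 'a \<Rightarrow> 'a \<Rightarrow> ('a \<Rightarrow> 'a) \<Rightarrow> nat \<Rightarrow> 'a m2 \<Rightarrow> bool" where
  "tt_cus unitary Ov \<pi> \<theta> gal k A \<longleftrightarrow>
     (\<exists>x\<in>Rset unitary Ov. \<exists>\<sigma>. unit_mod Ov \<pi> \<sigma> \<and>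
        (if unitary then square_mod Ov \<pi> k \<sigma> else \<not> square_mod Ov \<pi> k \<sigma>) \<and>
        conjugate_in unitary Ov \<pi> gal k A (M2 x (eps unitary \<theta> * \<sigma>) (eps unitary \<theta>) x))"

definition double_coset :: "bool \<Rightarrow> 'a::comm_ring_1 set \<Rightarrow> 'a \<Rightarrow> ('a \<Rightarrow> 'a) \<Rightarrow> nat \<Rightarrow> 'a m2 set \<Rightarrow> 'a m2 \<Rightarrow> 'a m2 set \<Rightarrow> 'a m2 set" where
  "double_coset unitary Ov \<pi> gal l S1 h S2 =
     {m \<in> Gset unitary Ov \<pi> gal l. \<exists>s1\<in>S1. \<exists>s2\<in>S2. mcong \<pi> l m (mmul (mmul s1 h) s2)}"

definition Wset :: "bool \<Rightarrow> 'a::comm_ring_1 set \<Rightarrow> 'a \<Rightarrow> ('a \<Rightarrow> 'a) \<Rightarrow> nat \<Rightarrow> ('a \<Rightarrow> complex) \<Rightarrow>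
     'a m2 \<Rightarrow> 'a m2 \<Rightarrow> 'a m2 \<Rightarrow> 'a m2 set set" where
  "Wset unitary Ov \<pi> gal l \<psi> At1 At2 g =
     (let S1 = stabS unitary Ov \<pi> gal l \<psi> At1; S2 = stabS unitary Ov \<pi> gal l \<psi> At2;
          M = (\<lambda>x. madd At1 (mmul (mmul x At2) (minv unitary Ov \<pi> l x)))
      in {double_coset unitary Ov \<pi> gal l S1 h S2 | h.
            h \<in> Gset unitary Ov \<pi> gal l \<and>
            (\<exists>x \<in> Gset unitary Ov \<pi> gal l. mcong \<pi> (floor_half l) (mmul x (M g)) (mmul (M h) x))})"

end

theory Submission
  imports Defs
begin

locale stdset =
  fixes Ov :: "'a::idom set" and \<pi> \<theta> :: 'a and gal :: "'a \<Rightarrow> 'a"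
  assumes std: "standing_setup Ov \<pi> \<theta> gal"
begin

lemma sub: "subring_of Ov" and pi_in: "\<pi> \<in> Ov" and pi_nz: "\<pi> \<noteq> 0" and pi_nu: "\<not> unit_in Ov \<pi>"
  and dvr: "\<And>x. x\<in>Ov \<Longrightarrow> x \<noteq> 0 \<Longrightarrow> \<exists>u n. unit_in Ov u \<and> x = u * \<pi> ^ n"
  and compl: "pi_adically_complete Ov \<pi>"
  and pi2: "\<not> \<pi> dvd 2" and th2u: "unit_in Ov (\<theta>^2)" and th2ns: "\<not> (\<exists>y\<in>Ov. y^2 = \<theta>^2)"
  and decex: "\<And>x. \<exists>!ab. fst ab \<in> Ov \<and> snd ab \<in> Ov \<and> x = fst ab + snd ab * \<theta>"
  and galdef: "\<And>a b. a\<in>Ov \<Longrightarrow> b\<in>Ov \<Longrightarrow> gal (a + b * \<theta>) = a - b * \<theta>"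
  using std unfolding standing_setup_def dvr_with_uniformizer_def by auto

lemma O0[simp]: "0 \<in> Ov" and O1[simp]: "1 \<in> Ov"
  and Oadd[intro]: "x\<in>Ov \<Longrightarrow> y\<in>Ov \<Longrightarrow> x+y\<in>Ov"
  and Odiff[intro]: "x\<in>Ov \<Longrightarrow> y\<in>Ov \<Longrightarrow> x-y\<in>Ov"
  and Omult[intro]: "x\<in>Ov \<Longrightarrow> y\<in>Ov \<Longrightarrow> x*y\<in>Ov"
  using sub unfolding subring_of_def by auto

lemma Ouminus[intro]: "x\<in>Ov \<Longrightarrow> -x\<in>Ov"
  using Odiff[of 0 x] by simp

lemma Opow[intro]: "x\<in>Ov \<Longrightarrow> x^n\<in>Ov"
  by (induction n) auto

lemma Onum[intro,simp]: "(numeral n :: 'a) \<in> Ov"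
proof (induction n)
  case One then show ?case by simp
next
  case (Bit0 n) then show ?case by (metis Oadd numeral_Bit0)
next
  case (Bit1 n) then show ?case by (metis Oadd O1 numeral_Bit1)
qed

lemma th2_in[simp]: "\<theta>^2 \<in> Ov" using th2u unfolding unit_in_def by auto

lemma dec: "\<exists>p q. p\<in>Ov \<and> q\<in>Ov \<and> x = p + q*\<theta>"
  using decex[of x] by auto

lemma dec_uniq: "p\<in>Ov \<Longrightarrow> q\<in>Ov \<Longrightarrow> p'\<in>Ov \<Longrightarrow> q'\<in>Ov \<Longrightarrow> p + q*\<theta> = p' + q'*\<theta> \<Longrightarrow> p = p' \<and> q = q'"
  using decex[of "p + q*\<theta>"] by (metis fst_conv snd_conv)

lemma th_notin: "\<theta> \<notin> Ov"
proof
  assume "\<theta> \<in> Ov"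
  then have "\<theta> + 0*\<theta> = 0 + 1*\<theta>" by simp
  with dec_uniq[of \<theta> 0 0 1] \<open>\<theta> \<in> Ov\<close> show False by simp
qed

lemma gal_O[simp]: "a \<in> Ov \<Longrightarrow> gal a = a"
  using galdef[of a 0] by simp

lemma gal_th[simp]: "gal \<theta> = - \<theta>"
  using galdef[of 0 1] by simp

lemma gal_add[simp]: "gal (x + y) = gal x + gal y"
proof -
  obtain p q where x: "p\<in>Ov" "q\<in>Ov" "x = p + q*\<theta>" using dec by blast
  obtain p' q' where y: "p'\<in>Ov" "q'\<in>Ov" "y = p' + q'*\<theta>" using dec by blast
  have "x + y = (p+p') + (q+q')*\<theta>" using x y by (simp add: algebra_simps)
  moreover have "p+p' \<in> Ov" "q+q' \<in> Ov" using x y by auto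
  ultimately have e1: "gal (x+y) = (p+p') - (q+q')*\<theta>" using galdef by metis
  have e2: "gal x = p - q*\<theta>" "gal y = p' - q'*\<theta>" using x y galdef by auto
  show ?thesis unfolding e1 e2 by (simp add: algebra_simps)
qed

lemma gal_mult[simp]: "gal (x * y) = gal x * gal y"
proof -
  obtain p q where x: "p\<in>Ov" "q\<in>Ov" "x = p + q*\<theta>" using dec by blast
  obtain p' q' where y: "p'\<in>Ov" "q'\<in>Ov" "y = p' + q'*\<theta>" using dec by blast
  have "x * y = (p*p' + q*q'*\<theta>^2) + (p*q'+q*p')*\<theta>" using x y by (simp add: algebra_simps power2_eq_square)
  moreover have "p*p' + q*q'*\<theta>^2 \<in> Ov" "p*q'+q*p' \<in> Ov" using x y th2_in by (auto intro!: Oadd Omult)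
  ultimately have e1: "gal (x*y) = (p*p' + q*q'*\<theta>^2) - (p*q'+q*p')*\<theta>" using galdef by metis
  have e2: "gal x = p - q*\<theta>" "gal y = p' - q'*\<theta>" using x y galdef by auto
  show ?thesis unfolding e1 e2 by (simp add: algebra_simps power2_eq_square)
qed

lemma gal_gal[simp]: "gal (gal x) = x"
proof -
  obtain p q where x: "p\<in>Ov" "q\<in>Ov" "x = p + q*\<theta>" using dec by blast
  have "gal x = p + (-q)*\<theta>" using x galdef by simp
  moreover have "-q \<in> Ov" using x by auto
  ultimately have "gal (gal x) = p - (-q)*\<theta>" using galdef x by metis
  then show ?thesis using x by simp
qed

lemma gal0[simp]: "gal 0 = 0" using gal_O by simp
lemma gal1[simp]: "gal 1 = 1" using gal_O by simp
lemma gal_neg[simp]: "gal (-x) = - gal x"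
  using gal_add[of x "-x"] by (simp add: add_eq_0_iff2)
lemma gal_diff[simp]: "gal (x - y) = gal x - gal y"
  using gal_add[of x "-y"] by simp
lemma gal_pow[simp]: "gal (x^n) = gal x ^ n"
  by (induction n) auto
lemma gal_num[simp]: "gal (numeral n) = numeral n" by simp

lemma dvd_O: assumes "x \<in> Ov" "\<pi>^k dvd x" shows "\<exists>y\<in>Ov. x = \<pi>^k * y"
proof -
  obtain r where r: "x = \<pi>^k * r" using assms by (auto elim: dvdE)
  obtain p q where pq: "p\<in>Ov" "q\<in>Ov" "r = p + q*\<theta>" using dec by blast
  have "x + 0*\<theta> = \<pi>^k*p + (\<pi>^k*q)*\<theta>" using r pq by (simp add: algebra_simps)
  then have "\<pi>^k*q = 0" using dec_uniq[of x 0 "\<pi>^k*p" "\<pi>^k*q"] assms pq pi_in by auto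
  then have "q = 0" using pi_nz by simp
  then show ?thesis using r pq by auto
qed

lemma dvd_gal: "\<pi>^k dvd x \<Longrightarrow> \<pi>^k dvd gal x"
  using pi_in by (auto elim!: dvdE)

lemma unitO_inv: "unit_in Ov u \<Longrightarrow> \<exists>v\<in>Ov. u*v = 1" unfolding unit_in_def by auto

lemma notdvd_unit: assumes "x \<in> Ov" "\<not> \<pi> dvd x" shows "unit_in Ov x"
proof -
  have "x \<noteq> 0" using assms by auto
  then obtain u n where u: "unit_in Ov u" "x = u*\<pi>^n" using dvr assms by blast
  have "n = 0" using u assms by (cases n) auto
  then show ?thesis using u by simp
qed

lemma notdvd_inv: assumes "x \<in> Ov" "\<not> \<pi> dvd x" shows "\<exists>v\<in>Ov. x*v = 1"
  using notdvd_unit[OF assms] unitO_inv by blast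

lemma pi_not_dvd_1: "\<not> \<pi> dvd 1"
proof
  assume "\<pi> dvd 1"
  then obtain y where "y\<in>Ov" "1 = \<pi>^1 * y" using dvd_O[of 1 1] by auto
  then show False using pi_nu pi_in unfolding unit_in_def by (metis power_one_right)
qed

lemma pi_not_dvd_unit: "u * v = 1 \<Longrightarrow> \<not> \<pi> dvd u"
  using pi_not_dvd_1 by (metis dvd_mult2)

lemma pi_prime: assumes "x\<in>Ov" "y\<in>Ov" "\<pi> dvd x*y" shows "\<pi> dvd x \<or> \<pi> dvd y"
proof (rule ccontr)
  assume "\<not> (\<pi> dvd x \<or> \<pi> dvd y)"
  then obtain u v where "u\<in>Ov" "v\<in>Ov" "x*u = 1" "y*v=1" using notdvd_inv assms by meson
  then have "(x*y)*(u*v) = 1" by (metis mult.assoc mult.left_commute mult_1_right)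
  then show False using pi_not_dvd_unit assms(3) by blast
qed

lemma pi_dvd_sq: "x\<in>Ov \<Longrightarrow> \<pi> dvd x^2 \<Longrightarrow> \<pi> dvd x"
  using pi_prime[of x x] by (simp add: power2_eq_square)

lemma two_inv: "\<exists>i\<in>Ov. 2*i = 1"
  using notdvd_inv[of 2] pi2 by auto

lemma th_unit: "\<exists>i\<in>Ov. \<theta>^2*i = 1"
  using th2u unfolding unit_in_def by auto

lemma dvd_cancel_unit: assumes "u*v = 1" "\<pi>^k dvd u*x" shows "\<pi>^k dvd x"
proof -
  have "x = v*(u*x)" using assms(1) by (simp add: algebra_simps)
  then show ?thesis using assms(2) by (metis dvd_mult)
qed

lemma dvd_cancel_2: "\<pi>^k dvd 2*x \<Longrightarrow> \<pi>^k dvd x"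
  using two_inv dvd_cancel_unit by blast

lemma dvd_cancel_th2: "\<pi>^k dvd \<theta>^2*x \<Longrightarrow> \<pi>^k dvd x"
  using th_unit dvd_cancel_unit by blast

lemma dvd_cancel_th: "\<pi>^k dvd \<theta>*x \<Longrightarrow> \<pi>^k dvd x"
proof -
  assume "\<pi>^k dvd \<theta>*x"
  then have "\<pi>^k dvd \<theta>^2*x" by (metis dvd_mult mult.assoc power2_eq_square)
  then show ?thesis using dvd_cancel_th2 by blast
qed

lemma pow_dvd_mono: "j \<le> k \<Longrightarrow> \<pi>^k dvd x \<Longrightarrow> \<pi>^j dvd x"
  using le_imp_power_dvd dvd_trans by blast

lemma dvd_all_zero: assumes "x\<in>Ov" "\<And>k. \<pi>^k dvd x" shows "x = 0"
proof (rule ccontr)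
  assume "x \<noteq> 0"
  then obtain u n where u: "unit_in Ov u" "x = u*\<pi>^n" using dvr assms by blast
  obtain r where "u*\<pi>^n = \<pi>^(Suc n) * r" using assms(2)[of "Suc n"] u by (auto elim: dvdE)
  then have "\<pi>^n * u = \<pi>^n * (\<pi>*r)" by (simp add: algebra_simps)
  then have "u = \<pi>*r" using pi_nz by simp
  then show False using u pi_not_dvd_unit unitO_inv by (metis dvd_triv_left)
qed

end

context stdset begin

lemma sq_cong: "square_mod Ov \<pi> k x \<Longrightarrow> \<pi>^k dvd (x - x') \<Longrightarrow> square_mod Ov \<pi> k x'"
proof -
  assume a: "square_mod Ov \<pi> k x" "\<pi>^k dvd (x - x')"
  then obtain y where y: "y\<in>Ov" "\<pi>^k dvd (x - y^2)" unfolding square_mod_def by auto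
  have eq: "x' - y^2 = (x - y^2) - (x - x')" by simp
  have "\<pi>^k dvd ((x - y^2) - (x - x'))" using y a dvd_diff by blast
  then have "\<pi>^k dvd (x' - y^2)" unfolding eq .
  then show ?thesis using y unfolding square_mod_def by auto
qed

lemma sq_mono: "j \<le> k \<Longrightarrow> square_mod Ov \<pi> k x \<Longrightarrow> square_mod Ov \<pi> j x"
  unfolding square_mod_def using pow_dvd_mono by blast

lemma newton:
  assumes x: "x\<in>Ov" and y: "y\<in>Ov" "\<not> \<pi> dvd y" and n: "n \<ge> 1" "\<pi>^n dvd (x - y^2)"
    and i: "i\<in>Ov" "2*y*i = 1"
  shows "y + (x-y^2)*i \<in> Ov" "\<not> \<pi> dvd (y + (x-y^2)*i)" "\<pi>^Suc n dvd (x - (y + (x-y^2)*i)^2)"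
    "\<pi>^n dvd ((y + (x-y^2)*i) - y)"
proof -
  define d where "d = x - y^2"
  have dO: "d \<in> Ov" using x y unfolding d_def by auto
  show "y + (x-y^2)*i \<in> Ov" using dO y i unfolding d_def[symmetric] by auto
  have e: "x - (y + d*i)^2 = - ((d*i)^2)"
  proof -
    have "x - (y + d*i)^2 = d - (2*y*i)*d - ((d*i)^2)" unfolding d_def by (simp add: algebra_simps power2_eq_square)
    then show ?thesis using i by simp
  qed
  have "\<pi>^n dvd d" using n unfolding d_def by simp
  then have "\<pi>^(n+n) dvd (d*i)^2" by (simp add: power_add power2_eq_square mult_dvd_mono)
  then have "\<pi>^Suc n dvd (d*i)^2" using n pow_dvd_mono[of "Suc n" "n+n"] by simp
  then show "\<pi>^Suc n dvd (x - (y + (x-y^2)*i)^2)" unfolding d_def[symmetric] e by simp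
  show "\<pi>^n dvd ((y + (x-y^2)*i) - y)" using \<open>\<pi>^n dvd d\<close> unfolding d_def[symmetric] by simp
  have "\<pi> dvd d*i" using \<open>\<pi>^n dvd d\<close> n pow_dvd_mono[of 1 n] by auto
  then show "\<not> \<pi> dvd (y + (x-y^2)*i)" using y(2) unfolding d_def[symmetric]
    by (metis dvd_add_left_iff)
qed

lemma inv2y: assumes "y\<in>Ov" "\<not> \<pi> dvd y" shows "\<exists>i\<in>Ov. 2*y*i = 1"
proof -
  have "\<not> \<pi> dvd 2*y" using pi_prime[of 2 y] pi2 assms by auto
  then show ?thesis using notdvd_inv[of "2*y"] assms by auto
qed

lemma sq_lift: assumes x: "x\<in>Ov" "\<not> \<pi> dvd x" and s: "square_mod Ov \<pi> 1 x"
  shows "square_mod Ov \<pi> n x"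
proof -
  obtain y0 where y0: "y0\<in>Ov" "\<pi> dvd (x - y0^2)" using s unfolding square_mod_def by auto
  have "\<not> \<pi> dvd y0"
  proof
    assume "\<pi> dvd y0" then have "\<pi> dvd y0^2" by (simp add: power2_eq_square)
    moreover have "x = (x - y0^2) + y0^2" by simp
    ultimately have "\<pi> dvd x" using y0 by (metis dvd_add)
    then show False using x by simp
  qed
  have "\<forall>m\<ge>1. \<exists>y\<in>Ov. \<not> \<pi> dvd y \<and> \<pi>^m dvd (x - y^2)"
  proof (intro allI impI)
    fix m :: nat assume "m \<ge> 1"
    then show "\<exists>y\<in>Ov. \<not> \<pi> dvd y \<and> \<pi>^m dvd (x - y^2)"
    proof (induction m rule: dec_induct)
      case base then show ?case using y0 \<open>\<not> \<pi> dvd y0\<close> by auto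
    next
      case (step m)
      then obtain y where y: "y\<in>Ov" "\<not> \<pi> dvd y" "\<pi>^m dvd (x - y^2)" by auto
      obtain i where "i\<in>Ov" "2*y*i = 1" using inv2y y by blast
      from newton[OF x(1) y(1) y(2) step(1) y(3) this] show ?case by blast
    qed
  qed
  show ?thesis
  proof (cases "n = 0")
    case True then show ?thesis using y0 unfolding square_mod_def by auto
  next
    case False
    then obtain y where "y\<in>Ov" "\<pi>^n dvd (x - y^2)" using \<open>\<forall>m\<ge>1. _\<close>[rule_format, of n] by auto
    then show ?thesis unfolding square_mod_def by auto
  qed
qed

lemma nonsq_lift: "x\<in>Ov \<Longrightarrow> \<not> \<pi> dvd x \<Longrightarrow> \<not> square_mod Ov \<pi> n x \<Longrightarrow> \<not> square_mod Ov \<pi> 1 x"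
  using sq_lift by blast

definition iv2 :: "'a \<Rightarrow> 'a" where "iv2 y = (SOME i. i\<in>Ov \<and> 2*y*i = 1)"

lemma iv2: assumes "y\<in>Ov" "\<not> \<pi> dvd y" shows "iv2 y \<in> Ov" "2*y*iv2 y = 1"
proof -
  have "\<exists>i. i\<in>Ov \<and> 2*y*i = 1" using inv2y[OF assms] by blast
  then have "iv2 y \<in> Ov \<and> 2*y*iv2 y = 1" unfolding iv2_def by (rule someI_ex)
  then show "iv2 y \<in> Ov" "2*y*iv2 y = 1" by auto
qed

definition nstep :: "'a \<Rightarrow> 'a \<Rightarrow> 'a" where "nstep x y = y + (x - y^2) * iv2 y"

lemma nstep: assumes x: "x\<in>Ov" and y: "y\<in>Ov" "\<not> \<pi> dvd y" and n: "n \<ge> 1" "\<pi>^n dvd (x - y^2)"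
  shows "nstep x y \<in> Ov" "\<not> \<pi> dvd nstep x y" "\<pi>^Suc n dvd (x - (nstep x y)^2)" "\<pi>^n dvd (nstep x y - y)"
  using newton[OF x y n iv2[OF y]] unfolding nstep_def by auto

lemma th2_nonsq: "\<not> square_mod Ov \<pi> 1 (\<theta>^2)"
proof
  assume "square_mod Ov \<pi> 1 (\<theta>^2)"
  then obtain y0 where y0: "y0\<in>Ov" "\<pi>^1 dvd (\<theta>^2 - y0^2)" unfolding square_mod_def by auto
  have th2nd: "\<not> \<pi> dvd \<theta>^2" using th_unit pi_not_dvd_unit by blast
  have ny0: "\<not> \<pi> dvd y0"
  proof
    assume "\<pi> dvd y0" then have "\<pi> dvd y0^2" by (simp add: power2_eq_square)
    moreover have "\<theta>^2 = (\<theta>^2 - y0^2) + y0^2" by simp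
    ultimately have "\<pi> dvd \<theta>^2" using y0 dvd_add[of \<pi> "\<theta>^2 - y0^2" "y0^2"] by simp
    then show False using th2nd by simp
  qed
  define Y where "Y = rec_nat y0 (\<lambda>_ y. nstep (\<theta>^2) y)"
  have Y0: "Y 0 = y0" and YS: "\<And>n. Y (Suc n) = nstep (\<theta>^2) (Y n)" unfolding Y_def by simp_all
  have inv1: "Y n \<in> Ov \<and> \<not> \<pi> dvd Y n \<and> \<pi>^Suc n dvd (\<theta>^2 - (Y n)^2)" for n
  proof (induction n)
    case 0 then show ?case using y0 ny0 Y0 by simp
  next
    case (Suc n)
    then have yn: "Y n \<in> Ov" "\<not> \<pi> dvd Y n" "\<pi>^Suc n dvd (\<theta>^2 - (Y n)^2)" by auto
    note nw = nstep[OF th2_in yn(1) yn(2) _ yn(3)]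
    show ?case unfolding YS using nw by simp
  qed
  have inv2: "\<pi>^Suc n dvd (Y (Suc n) - Y n)" for n
  proof -
    have yn: "Y n \<in> Ov" "\<not> \<pi> dvd Y n" "\<pi>^Suc n dvd (\<theta>^2 - (Y n)^2)" using inv1 by auto
    note nw = nstep[OF th2_in yn(1) yn(2) _ yn(3)]
    show ?thesis unfolding YS using nw(4) by simp
  qed
  have cau: "\<pi>^N dvd (Y m - Y N)" if "m \<ge> N" for m N
    using that
  proof (induction m rule: dec_induct)
    case base then show ?case by simp
  next
    case (step m)
    have "\<pi>^N dvd (Y (Suc m) - Y m)" using inv2[of m] pow_dvd_mono[of N "Suc m"] step by auto
    then have "\<pi>^N dvd ((Y (Suc m) - Y m) + (Y m - Y N))" using step(3) dvd_add by blast
    moreover have "(Y (Suc m) - Y m) + (Y m - Y N) = Y (Suc m) - Y N" by simp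
    ultimately show ?case by simp
  qed
  have "\<forall>k. \<exists>N. \<forall>m\<ge>N. \<forall>n\<ge>N. \<pi>^k dvd (Y m - Y n)"
  proof
    fix k show "\<exists>N. \<forall>m\<ge>N. \<forall>n\<ge>N. \<pi>^k dvd (Y m - Y n)"
    proof (intro exI allI impI)
      fix m n assume "m \<ge> k" "n \<ge> k"
      then have "\<pi>^k dvd ((Y m - Y k) - (Y n - Y k))" using cau dvd_diff by blast
      moreover have "(Y m - Y k) - (Y n - Y k) = Y m - Y n" by simp
      ultimately show "\<pi>^k dvd (Y m - Y n)" by simp
    qed
  qed
  moreover have "\<forall>n. Y n \<in> Ov" using inv1 by blast
  moreover have "\<forall>s::nat \<Rightarrow> 'a. (\<forall>n. s n \<in> Ov) \<longrightarrow>
        (\<forall>k. \<exists>N. \<forall>m\<ge>N. \<forall>n\<ge>N. \<pi> ^ k dvd (s m - s n)) \<longrightarrow>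
        (\<exists>L\<in>Ov. \<forall>k. \<exists>N. \<forall>n\<ge>N. \<pi> ^ k dvd (s n - L))" using compl unfolding pi_adically_complete_def .
  ultimately have "\<exists>L\<in>Ov. \<forall>k. \<exists>N. \<forall>n\<ge>N. \<pi>^k dvd (Y n - L)" by simp
  then obtain L where L: "L\<in>Ov" "\<forall>k. \<exists>N. \<forall>n\<ge>N. \<pi>^k dvd (Y n - L)" by blast
  have "\<theta>^2 - L^2 = 0"
  proof (rule dvd_all_zero)
    show "\<theta>^2 - L^2 \<in> Ov" using L by auto
    fix k
    obtain N where N: "\<forall>n\<ge>N. \<pi>^k dvd (Y n - L)" using L by blast
    define n where "n = max N k"
    have d1: "\<pi>^k dvd (Y n - L)" using N unfolding n_def by simp
    have d2: "\<pi>^k dvd (\<theta>^2 - (Y n)^2)" using inv1[of n] pow_dvd_mono[of k "Suc n"] unfolding n_def by auto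
    have eq: "\<theta>^2 - L^2 = (\<theta>^2 - (Y n)^2) + (Y n - L)*(Y n + L)" by (simp add: algebra_simps power2_eq_square)
    have "\<pi>^k dvd (Y n - L)*(Y n + L)" using d1 by (rule dvd_mult2)
    then have "\<pi>^k dvd ((\<theta>^2 - (Y n)^2) + (Y n - L)*(Y n + L))" using d2 dvd_add by blast
    then show "\<pi>^k dvd (\<theta>^2 - L^2)" unfolding eq .
  qed
  then have "L^2 = \<theta>^2" by simp
  then show False using th2ns L by blast
qed

lemma NS: assumes n: "n\<in>Ov" "\<not> square_mod Ov \<pi> 1 n" and uv: "u\<in>Ov" "v\<in>Ov"
  and d: "\<pi> dvd (u^2 - n*v^2)" shows "\<pi> dvd u \<and> \<pi> dvd v"
proof -
  have "\<pi> dvd v"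
  proof (rule ccontr)
    assume "\<not> \<pi> dvd v"
    then obtain w where w: "w\<in>Ov" "v*w = 1" using notdvd_inv uv by blast
    have "n - (u*w)^2 = w^2 * (n*v^2 - u^2)"
    proof -
      have "n = n*(v*w)^2" using w by simp
      then have "n - (u*w)^2 = n*(v*w)^2 - (u*w)^2" by simp
      also have "\<dots> = w^2 * (n*v^2 - u^2)" by (simp add: algebra_simps power2_eq_square)
      finally show ?thesis .
    qed
    moreover have "\<pi> dvd (n*v^2 - u^2)" using d dvd_minus_iff[of \<pi> "u^2 - n*v^2"] by simp
    then have "\<pi> dvd w^2 * (n*v^2 - u^2)" by (rule dvd_mult)
    ultimately have "\<pi>^1 dvd (n - (u*w)^2)" by simp
    then show False using n uv w unfolding square_mod_def by auto
  qed
  then have "\<pi> dvd n*v^2" by (simp add: power2_eq_square)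
  moreover have "u^2 = (u^2 - n*v^2) + n*v^2" by simp
  ultimately have "\<pi> dvd u^2" using d by (metis dvd_add)
  then show ?thesis using pi_dvd_sq uv \<open>\<pi> dvd v\<close> by auto
qed

end

lemma cadd: "(p::'a::comm_ring_1) dvd (x - x') \<Longrightarrow> p dvd (y - y') \<Longrightarrow> p dvd ((x+y) - (x'+y'))"
proof -
  assume "p dvd (x - x')" "p dvd (y - y')"
  then have "p dvd ((x - x') + (y - y'))" by (rule dvd_add)
  moreover have "(x - x') + (y - y') = (x+y) - (x'+y')" by simp
  ultimately show ?thesis by simp
qed

lemma cdiff: "(p::'a::comm_ring_1) dvd (x - x') \<Longrightarrow> p dvd (y - y') \<Longrightarrow> p dvd ((x-y) - (x'-y'))"
proof -
  assume "p dvd (x - x')" "p dvd (y - y')"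
  then have "p dvd ((x - x') - (y - y'))" by (rule dvd_diff)
  moreover have "(x - x') - (y - y') = (x-y) - (x'-y')" by simp
  ultimately show ?thesis by simp
qed

lemma cmul: "(p::'a::comm_ring_1) dvd (x - x') \<Longrightarrow> p dvd (y - y') \<Longrightarrow> p dvd (x*y - x'*y')"
proof -
  assume a: "p dvd (x - x')" "p dvd (y - y')"
  have "p dvd (x - x')*y" using a(1) by (rule dvd_mult2)
  moreover have "p dvd x'*(y - y')" using a(2) by (rule dvd_mult)
  ultimately have "p dvd ((x - x')*y + x'*(y - y'))" by (rule dvd_add)
  moreover have "(x - x')*y + x'*(y - y') = x*y - x'*y'" by (simp add: algebra_simps)
  ultimately show ?thesis by simp
qed

lemma crefl: "(p::'a::comm_ring_1) dvd (x - x)" by simp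

lemma csym: "(p::'a::comm_ring_1) dvd (x - y) \<Longrightarrow> p dvd (y - x)"
  by (metis dvd_minus_iff minus_diff_eq)

lemma ctrans: "(p::'a::comm_ring_1) dvd (x - y) \<Longrightarrow> p dvd (y - z) \<Longrightarrow> p dvd (x - z)"
proof -
  assume "p dvd (x - y)" "p dvd (y - z)"
  then have "p dvd ((x - y) + (y - z))" by (rule dvd_add)
  then show ?thesis by simp
qed

lemma cneg: "(p::'a::comm_ring_1) dvd (x - x') \<Longrightarrow> p dvd ((-x) - (-x'))"
  by (metis dvd_minus_iff minus_diff_eq minus_diff_minus)

lemma mmul_M2[simp]: "mmul (M2 a b c d) (M2 e f g h) = M2 (a*e+b*g) (a*f+b*h) (c*e+d*g) (c*f+d*h)" by simp

lemma mmul_assoc: "mmul (mmul A B) C = mmul A (mmul B (C::'a::comm_ring_1 m2))"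
  by (cases A; cases B; cases C) (simp add: algebra_simps)

lemma mmul_one[simp]: "mmul mone A = A" "mmul A mone = (A::'a::comm_ring_1 m2)"
  by (cases A; simp add: mone_def)+

lemma mcong_refl[simp]: "mcong p k A A"
  by (cases A) simp

lemma mcong_sym: "mcong p k A B \<Longrightarrow> mcong p k B A"
  by (cases A; cases B) (auto intro: csym)

lemma mcong_trans[trans]: "mcong p k A B \<Longrightarrow> mcong p k B C \<Longrightarrow> mcong p k A C"
  by (cases A; cases B; cases C) (auto intro: ctrans)

lemma mcong_mono: "j \<le> k \<Longrightarrow> mcong p k A B \<Longrightarrow> mcong p j A B"
  by (cases A; cases B) (auto intro: dvd_trans[OF le_imp_power_dvd])

lemma mcong_mult: "mcong p k A A' \<Longrightarrow> mcong p k B B' \<Longrightarrow> mcong p k (mmul A B) (mmul A' B')"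
  by (cases A; cases A'; cases B; cases B'; simp only: mcong.simps mmul.simps; elim conjE; intro conjI cadd cmul; assumption)

lemma mcong_multL: "mcong p k B B' \<Longrightarrow> mcong p k (mmul A B) (mmul A B')"
  using mcong_mult[OF mcong_refl] by blast

lemma mcong_multR: "mcong p k A A' \<Longrightarrow> mcong p k (mmul A B) (mmul A' B)"
  using mcong_mult[OF _ mcong_refl] by blast

lemma mcong_add: "mcong p k A A' \<Longrightarrow> mcong p k B B' \<Longrightarrow> mcong p k (madd A B) (madd A' B')"
  by (cases A; cases A'; cases B; cases B'; simp only: mcong.simps madd.simps; elim conjE; intro conjI cadd; assumption)

lemma mcong_smult: "mcong p k A A' \<Longrightarrow> mcong p k (msmult s A) (msmult s A')"
  by (cases A; cases A'; simp only: mcong.simps msmult.simps; elim conjE; intro conjI cmul crefl; assumption)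

lemma mcong_smult2: "p^k dvd (s - s') \<Longrightarrow> mcong p k (msmult s A) (msmult s' A)"
  by (cases A; simp only: mcong.simps msmult.simps; intro conjI cmul crefl; assumption)

lemma smult_mmul: "mmul (msmult s A) B = msmult s (mmul A B)" "mmul A (msmult s B) = msmult s (mmul A (B::'a::comm_ring_1 m2))"
  by (cases A; cases B; simp add: algebra_simps)+

lemma smult_smult: "msmult s (msmult t A) = msmult (s*t) (A::'a::comm_ring_1 m2)"
  by (cases A) (simp add: algebra_simps)

lemma smult_one: "msmult 1 A = (A::'a::comm_ring_1 m2)"
  by (cases A) simp

fun det2 :: "'a::comm_ring_1 m2 \<Rightarrow> 'a" where "det2 (M2 a b c d) = a*d - b*c"

lemma det2_mult: "det2 (mmul A B) = det2 A * det2 B"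
  by (cases A; cases B) (simp add: algebra_simps)

lemma det2_one[simp]: "det2 mone = 1" by (simp add: mone_def)

lemma tr_comm: "mtrace (mmul A B) = mtrace (mmul B (A::'a::comm_ring_1 m2))"
  by (cases A; cases B) (simp add: algebra_simps)

lemma det_add: "det2 (madd A B) = det2 A + det2 B + mtrace A * mtrace B - mtrace (mmul A (B::'a::comm_ring_1 m2))"
  by (cases A; cases B) (simp add: algebra_simps)

lemma mcong_det: "mcong p k A B \<Longrightarrow> p^k dvd (det2 A - det2 B)"
  by (cases A; cases B; simp only: mcong.simps det2.simps; elim conjE; intro cdiff cmul; assumption)

lemma mcong_tr: "mcong p k A B \<Longrightarrow> p^k dvd (mtrace A - mtrace B)"
  by (cases A; cases B; simp only: mcong.simps mtrace.simps; elim conjE; intro cadd; assumption)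

lemma det_smult: "det2 (msmult s A) = s^2 * det2 A"
  by (cases A) (simp add: algebra_simps power2_eq_square)

context stdset begin

lemma Rset_add: "x \<in> Rset u Ov \<Longrightarrow> y \<in> Rset u Ov \<Longrightarrow> x + y \<in> Rset u Ov"
  and Rset_mult: "x \<in> Rset u Ov \<Longrightarrow> y \<in> Rset u Ov \<Longrightarrow> x * y \<in> Rset u Ov"
  and Rset_diff: "x \<in> Rset u Ov \<Longrightarrow> y \<in> Rset u Ov \<Longrightarrow> x - y \<in> Rset u Ov"
  and Rset_O: "x \<in> Ov \<Longrightarrow> x \<in> Rset u Ov"
  unfolding Rset_def by auto

lemma ent_mmul: "entries A \<subseteq> Rset u Ov \<Longrightarrow> entries B \<subseteq> Rset u Ov \<Longrightarrow> entries (mmul A B) \<subseteq> Rset u Ov"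
  by (cases A; cases B) (auto intro!: Rset_add Rset_mult)

lemma ent_smult: "s \<in> Rset u Ov \<Longrightarrow> entries B \<subseteq> Rset u Ov \<Longrightarrow> entries (msmult s B) \<subseteq> Rset u Ov"
  by (cases B) (auto intro!: Rset_mult)

lemma ent_madd: "entries A \<subseteq> Rset u Ov \<Longrightarrow> entries B \<subseteq> Rset u Ov \<Longrightarrow> entries (madd A B) \<subseteq> Rset u Ov"
  by (cases A; cases B) (auto intro!: Rset_add)

lemma ent_one: "entries mone \<subseteq> Rset u Ov"
  by (auto simp: mone_def intro: Rset_O)

lemma mstar_M2[simp]: "mstar gal (M2 a b c d) = M2 (gal d) (gal b) (gal c) (gal a)"
  by (simp add: mstar_def Wmat_def)

lemma mstar_mult: "mstar gal (mmul A B) = mmul (mstar gal B) (mstar gal A)"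
  by (cases A; cases B) (simp add: algebra_simps)

lemma mstar_star[simp]: "mstar gal (mstar gal A) = A"
  by (cases A) simp

lemma mstar_one[simp]: "mstar gal mone = mone"
  by (simp add: mone_def)

lemma mstar_smult: "mstar gal (msmult s A) = msmult (gal s) (mstar gal A)"
  by (cases A) simp

lemma mstar_cong: "mcong \<pi> k A B \<Longrightarrow> mcong \<pi> k (mstar gal A) (mstar gal B)"
proof (cases A; cases B)
  fix a b c d e f g h assume "mcong \<pi> k A B" "A = M2 a b c d" "B = M2 e f g h"
  then show ?thesis using dvd_gal[of k "a - e"] dvd_gal[of k "b - f"] dvd_gal[of k "c - g"] dvd_gal[of k "d - h"]
    by simp
qed

end

context stdset begin

abbreviation G where "G u k \<equiv> Gset u Ov \<pi> gal k"
abbreviation R where "R u \<equiv> Rset u Ov"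
abbreviation mc where "mc k \<equiv> mcong \<pi> k"
abbreviation st where "st \<equiv> mstar gal"

lemma G_def': "g \<in> G u k \<longleftrightarrow> entries g \<subseteq> R u \<and>
         (\<exists>h. entries h \<subseteq> R u \<and> mc k (mmul g h) mone \<and> mc k (mmul h g) mone) \<and>
         (u \<longrightarrow> mc k (mmul (st g) g) mone)"
  unfolding Gset_def by simp

lemma rinv_uniq: assumes "mc k (mmul g h0) mone" "mc k (mmul h0 g) mone" "mc k (mmul g h) mone"
  shows "mc k h h0" "mc k (mmul h g) mone"
proof -
  have "mc k h (mmul (mmul h0 g) h)" using mcong_multR[OF mcong_sym[OF assms(2)], of h] by simp
  also have "mmul (mmul h0 g) h = mmul h0 (mmul g h)" by (simp add: mmul_assoc)
  also have "mc k \<dots> (mmul h0 mone)" by (rule mcong_multL[OF assms(3)])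
  finally show hh: "mc k h h0" by simp
  have "mc k (mmul h g) (mmul h0 g)" by (rule mcong_multR[OF hh])
  also have "mc k \<dots> mone" by (rule assms(2))
  finally show "mc k (mmul h g) mone" .
qed

lemma star_inv: assumes "mc k (mmul (st g) g) mone" "mc k (mmul g h) mone"
  shows "mc k (st g) h"
proof -
  have "mc k (st g) (mmul (st g) (mmul g h))" using mcong_multL[OF mcong_sym[OF assms(2)], of "st g"] by simp
  also have "mmul (st g) (mmul g h) = mmul (mmul (st g) g) h" by (simp add: mmul_assoc)
  also have "mc k \<dots> (mmul mone h)" by (rule mcong_multR[OF assms(1)])
  finally show ?thesis by simp
qed

lemma G_inv: assumes g: "g \<in> G u k" and h: "entries h \<subseteq> R u" "mc k (mmul g h) mone"
  shows "h \<in> G u k" "mc k (mmul h g) mone"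
proof -
  obtain h0 where h0: "entries h0 \<subseteq> R u" "mc k (mmul g h0) mone" "mc k (mmul h0 g) mone"
    using g unfolding G_def' by blast
  show hg: "mc k (mmul h g) mone" using rinv_uniq[OF h0(2,3) h(2)] by simp
  have "u \<longrightarrow> mc k (mmul (st h) h) mone"
  proof
    assume u: u
    have gu: "mc k (mmul (st g) g) mone" using g u unfolding G_def' by blast
    have "mc k (st g) h" by (rule star_inv[OF gu h(2)])
    then have "mc k (st (st g)) (st h)" by (rule mstar_cong)
    then have "mc k (st h) g" by (simp add: mcong_sym)
    then have "mc k (mmul (st h) h) (mmul g h)" by (rule mcong_multR)
    then show "mc k (mmul (st h) h) mone" using h(2) mcong_trans by blast
  qed
  then show "h \<in> G u k" unfolding G_def' using h hg g unfolding G_def' by blast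
qed

lemma G_ent: "g \<in> G u k \<Longrightarrow> entries g \<subseteq> R u" unfolding G_def' by blast

lemma G_one: "mone \<in> G u k"
  unfolding G_def' using ent_one[of u] by (auto intro!: exI[of _ mone])

lemma G_mono: assumes "j \<le> k" "g \<in> G u k" shows "g \<in> G u j"
  using assms unfolding G_def' by (meson mcong_mono)

lemma G_mult: assumes g1: "g1 \<in> G u k" and g2: "g2 \<in> G u k" shows "mmul g1 g2 \<in> G u k"
proof -
  obtain h1 where h1: "entries h1 \<subseteq> R u" "mc k (mmul g1 h1) mone" "mc k (mmul h1 g1) mone"
    using g1 unfolding G_def' by blast
  obtain h2 where h2: "entries h2 \<subseteq> R u" "mc k (mmul g2 h2) mone" "mc k (mmul h2 g2) mone"
    using g2 unfolding G_def' by blast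
  have i1: "mc k (mmul (mmul g1 g2) (mmul h2 h1)) mone"
  proof -
    have "mmul (mmul g1 g2) (mmul h2 h1) = mmul g1 (mmul (mmul g2 h2) h1)" by (simp add: mmul_assoc)
    also have "mc k \<dots> (mmul g1 (mmul mone h1))" by (intro mcong_multL mcong_multR h2)
    finally show ?thesis using h1 by (simp add: mcong_trans)
  qed
  have i2: "mc k (mmul (mmul h2 h1) (mmul g1 g2)) mone"
  proof -
    have "mmul (mmul h2 h1) (mmul g1 g2) = mmul h2 (mmul (mmul h1 g1) g2)" by (simp add: mmul_assoc)
    also have "mc k \<dots> (mmul h2 (mmul mone g2))" by (intro mcong_multL mcong_multR h1)
    finally show ?thesis using h2 by (simp add: mcong_trans)
  qed
  have un: "u \<longrightarrow> mc k (mmul (st (mmul g1 g2)) (mmul g1 g2)) mone"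
  proof
    assume u: u
    have s1: "mc k (mmul (st g1) g1) mone" and s2: "mc k (mmul (st g2) g2) mone"
      using g1 g2 u unfolding G_def' by auto
    have "mmul (st (mmul g1 g2)) (mmul g1 g2) = mmul (st g2) (mmul (mmul (st g1) g1) g2)"
      by (simp add: mstar_mult mmul_assoc)
    also have "mc k \<dots> (mmul (st g2) (mmul mone g2))" by (intro mcong_multL mcong_multR s1)
    finally show "mc k (mmul (st (mmul g1 g2)) (mmul g1 g2)) mone" using s2 by (simp add: mcong_trans)
  qed
  show ?thesis unfolding G_def'
    using G_ent[OF g1] G_ent[OF g2] ent_mmul i1 i2 un h1 h2 ent_mmul[OF h2(1) h1(1)] by blast
qed

abbreviation mi where "mi u k \<equiv> minv u Ov \<pi> k"

lemma minv: assumes g: "g \<in> G u k"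
  shows "entries (mi u k g) \<subseteq> R u" "mc k (mmul g (mi u k g)) mone" "mc k (mmul (mi u k g) g) mone"
    "mi u k g \<in> G u k"
proof -
  obtain h0 where h0: "entries h0 \<subseteq> R u" "mc k (mmul g h0) mone"
    using g unfolding G_def' by blast
  then have "entries (mi u k g) \<subseteq> R u \<and> mc k (mmul g (mi u k g)) mone"
    unfolding minv_def by (rule someI[where P = "\<lambda>h. entries h \<subseteq> R u \<and> mc k (mmul g h) mone", OF conjI])
  then show a: "entries (mi u k g) \<subseteq> R u" "mc k (mmul g (mi u k g)) mone" by auto
  show "mc k (mmul (mi u k g) g) mone" "mi u k g \<in> G u k" using G_inv[OF g a] by auto
qed

lemma rinv_eq: assumes g: "g \<in> G u k" and "mc k (mmul g h) mone" shows "mc k h (mi u k g)"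
  using rinv_uniq(1)[OF minv(2,3)[OF g] assms(2)] .

lemma minv_mult: assumes g1: "g1 \<in> G u k" and g2: "g2 \<in> G u k"
  shows "mc k (mi u k (mmul g1 g2)) (mmul (mi u k g2) (mi u k g1))"
proof -
  have "mmul (mmul g1 g2) (mmul (mi u k g2) (mi u k g1)) = mmul g1 (mmul (mmul g2 (mi u k g2)) (mi u k g1))"
    by (simp add: mmul_assoc)
  also have "mc k \<dots> (mmul g1 (mmul mone (mi u k g1)))" by (intro mcong_multL mcong_multR minv g2)
  finally have "mc k (mmul (mmul g1 g2) (mmul (mi u k g2) (mi u k g1))) mone"
    using minv(2)[OF g1] by (simp add: mcong_trans)
  from rinv_eq[OF G_mult[OF g1 g2] this] show ?thesis by (rule mcong_sym)
qed

lemma conj_inv: assumes "mc k (mmul g A) (mmul B g)" "mc k (mmul g h) mone" "mc k (mmul h g) mone"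
  shows "\<pi>^k dvd (mtrace A - mtrace B)" "\<pi>^k dvd (det2 A - det2 B)"
proof -
  have "mc k B (mmul B (mmul g h))" using mcong_multL[OF mcong_sym[OF assms(2)], of B] by simp
  also have "mmul B (mmul g h) = mmul (mmul B g) h" by (simp add: mmul_assoc)
  also have "mc k \<dots> (mmul (mmul g A) h)" by (intro mcong_multR mcong_sym[OF assms(1)])
  finally have B: "mc k (mmul (mmul g A) h) B" by (rule mcong_sym)
  have "mtrace (mmul (mmul g A) h) = mtrace (mmul A (mmul h g))"
    by (metis mmul_assoc tr_comm)
  moreover have "\<pi>^k dvd (mtrace (mmul A (mmul h g)) - mtrace A)"
    using mcong_tr[OF mcong_multL[OF assms(3)]] by simp
  moreover note mcong_tr[OF B]
  ultimately show "\<pi>^k dvd (mtrace A - mtrace B)" by (metis csym ctrans)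
  have "det2 (mmul (mmul g A) h) = det2 A * det2 (mmul g h)" by (simp add: det2_mult)
  moreover have "\<pi>^k dvd (det2 A * det2 (mmul g h) - det2 A * 1)"
    using mcong_det[OF assms(2)] cmul[OF crefl] by fastforce
  moreover note mcong_det[OF B]
  ultimately show "\<pi>^k dvd (det2 A - det2 B)" by (metis csym ctrans mult_1_right)
qed

end

lemma conj_expand: "mmul (mmul g (madd mone (msmult s B))) gi = madd (mmul g gi) (msmult s (mmul (mmul g B) gi))"
  by (cases g; cases gi; cases B) (simp add: mone_def algebra_simps)

context stdset begin

lemma ent_tr: "entries X \<subseteq> R u \<Longrightarrow> mtrace X \<in> R u"
  by (cases X) (auto intro: Rset_add)

lemma conjK: assumes g: "g \<in> G u l" and k: "mc l k (madd mone (msmult s B))"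
  shows "mc l (mmul (mmul g k) (mi u l g)) (madd mone (msmult s (mmul (mmul g B) (mi u l g))))"
proof -
  have "mc l (mmul (mmul g k) (mi u l g)) (mmul (mmul g (madd mone (msmult s B))) (mi u l g))"
    by (intro mcong_multR mcong_multL k)
  also have "\<dots> = madd (mmul g (mi u l g)) (msmult s (mmul (mmul g B) (mi u l g)))" by (rule conj_expand)
  also have "mc l \<dots> (madd mone (msmult s (mmul (mmul g B) (mi u l g))))"
    by (intro mcong_add minv(2)[OF g] mcong_refl)
  finally show ?thesis .
qed

abbreviation K where "K u l i \<equiv> Kgrp u Ov \<pi> gal l i"

lemma conjK_mem: assumes g: "g \<in> G u l" and k: "k \<in> K u l i"
  shows "mmul (mmul g k) (mi u l g) \<in> K u l i"
proof -
  obtain B where B: "entries B \<subseteq> R u" "mc l k (madd mone (msmult (\<pi>^i) B))" "k \<in> G u l"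
    using k unfolding Kgrp_def by blast
  have "mmul (mmul g k) (mi u l g) \<in> G u l" by (intro G_mult minv(4) g B(3))
  moreover have "entries (mmul (mmul g B) (mi u l g)) \<subseteq> R u"
    by (intro ent_mmul G_ent[OF g] B(1) minv(1)[OF g])
  ultimately show ?thesis using conjK[OF g B(2)] unfolding Kgrp_def by blast
qed

lemma psiA_cong: assumes "mc l k k'" shows "psiA u Ov \<pi> l \<psi> A k = psiA u Ov \<pi> l \<psi> A k'"
proof -
  have "(\<lambda>B. entries B \<subseteq> R u \<and> mc l k (madd mone (msmult (\<pi>^ceil_half l) B))) =
        (\<lambda>B. entries B \<subseteq> R u \<and> mc l k' (madd mone (msmult (\<pi>^ceil_half l) B)))"
    using assms by (meson mcong_sym mcong_trans)
  then show ?thesis unfolding psiA_def by simp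
qed

lemma psiA_spec: assumes "entries B0 \<subseteq> R u" "mc l k (madd mone (msmult (\<pi>^ceil_half l) B0))"
  shows "entries (SOME B. entries B \<subseteq> R u \<and> mc l k (madd mone (msmult (\<pi>^ceil_half l) B))) \<subseteq> R u"
    "mc l k (madd mone (msmult (\<pi>^ceil_half l) (SOME B. entries B \<subseteq> R u \<and> mc l k (madd mone (msmult (\<pi>^ceil_half l) B)))))"
    "psiA u Ov \<pi> l \<psi> A k = \<psi> (\<pi>^ceil_half l * mtrace (mmul A (SOME B. entries B \<subseteq> R u \<and> mc l k (madd mone (msmult (\<pi>^ceil_half l) B)))))"
proof -
  let ?B = "SOME B. entries B \<subseteq> R u \<and> mc l k (madd mone (msmult (\<pi>^ceil_half l) B))"
  have "entries ?B \<subseteq> R u \<and> mc l k (madd mone (msmult (\<pi>^ceil_half l) ?B))"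
    by (rule someI[where P = "\<lambda>B. entries B \<subseteq> R u \<and> mc l k (madd mone (msmult (\<pi>^ceil_half l) B))", OF conjI[OF assms(1,2)]])
  then show "entries ?B \<subseteq> R u" "mc l k (madd mone (msmult (\<pi>^ceil_half l) ?B))" by auto
  show "psiA u Ov \<pi> l \<psi> A k = \<psi> (\<pi>^ceil_half l * mtrace (mmul A ?B))" unfolding psiA_def Let_def ..
qed

lemma cancel_I: assumes "mc (a + b) (madd mone (msmult (\<pi>^a) X)) (madd mone (msmult (\<pi>^a) Y))"
  shows "mc b X Y"
proof -
  have c: "\<pi>^(a+b) dvd ((1 + \<pi>^a * x) - (1 + \<pi>^a * y)) \<Longrightarrow> \<pi>^b dvd (x - y)" for x y
  proof -
    assume "\<pi>^(a+b) dvd ((1 + \<pi>^a * x) - (1 + \<pi>^a * y))"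
    then have "\<pi>^a * \<pi>^b dvd \<pi>^a * (x - y)" by (simp add: power_add algebra_simps)
    then show ?thesis using pi_nz by simp
  qed
  have c0: "\<pi>^(a+b) dvd ((0 + \<pi>^a * x) - (0 + \<pi>^a * y)) \<Longrightarrow> \<pi>^b dvd (x - y)" for x y
  proof -
    assume "\<pi>^(a+b) dvd ((0 + \<pi>^a * x) - (0 + \<pi>^a * y))"
    then have "\<pi>^a * \<pi>^b dvd \<pi>^a * (x - y)" by (simp add: power_add algebra_simps)
    then show ?thesis using pi_nz by simp
  qed
  show ?thesis using assms c c0 by (cases X; cases Y) (simp add: mone_def del: add_0)
qed

lemma half: "ceil_half l + floor_half l = l" unfolding ceil_half_def floor_half_def by simp

lemma cent_stab:
  assumes psi: "good_character u Ov \<pi> l \<psi>" and A: "entries A \<subseteq> R u" and g: "g \<in> G u l"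
    and c: "mc (floor_half l) (mmul g A) (mmul A g)"
  shows "g \<in> stabS u Ov \<pi> gal l \<psi> A"
proof -
  let ?l2 = "ceil_half l" and ?l1 = "floor_half l"
  let ?gi = "mi u l g"
  have per: "\<And>x y. x \<in> R u \<Longrightarrow> y \<in> R u \<Longrightarrow> \<pi>^l dvd (x - y) \<Longrightarrow> \<psi> x = \<psi> y"
    using psi unfolding good_character_def by blast
  have l1l: "?l1 \<le> l" unfolding floor_half_def by simp
  have "psiA u Ov \<pi> l \<psi> A (mmul (mmul g k) ?gi) = psiA u Ov \<pi> l \<psi> A k" if k: "k \<in> K u l ?l2" for k
  proof -
    obtain B0 where B0: "entries B0 \<subseteq> R u" "mc l k (madd mone (msmult (\<pi>^?l2) B0))"
      using k unfolding Kgrp_def by blast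
    define B where "B = (SOME B. entries B \<subseteq> R u \<and> mc l k (madd mone (msmult (\<pi>^?l2) B)))"
    note sB = psiA_spec(1,2)[OF B0, folded B_def] psiA_spec(3)[where \<psi>=\<psi> and A=A, OF B0, folded B_def]
    define k' where "k' = mmul (mmul g k) ?gi"
    define B' where "B' = mmul (mmul g B) ?gi"
    have B'e: "entries B' \<subseteq> R u" unfolding B'_def by (intro ent_mmul G_ent[OF g] sB(1) minv(1)[OF g])
    have k'c: "mc l k' (madd mone (msmult (\<pi>^?l2) B'))" unfolding k'_def B'_def by (rule conjK[OF g sB(2)])
    define B'' where "B'' = (SOME B. entries B \<subseteq> R u \<and> mc l k' (madd mone (msmult (\<pi>^?l2) B)))"
    note sB'' = psiA_spec(1,2)[OF B'e k'c, folded B''_def] psiA_spec(3)[where \<psi>=\<psi> and A=A, OF B'e k'c, folded B''_def]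
    have "mc l (madd mone (msmult (\<pi>^?l2) B'')) (madd mone (msmult (\<pi>^?l2) B'))"
      using sB''(2) k'c by (meson mcong_sym mcong_trans)
    then have "mc (?l2 + ?l1) (madd mone (msmult (\<pi>^?l2) B'')) (madd mone (msmult (\<pi>^?l2) B'))"
      using half by simp
    then have BB: "mc ?l1 B'' B'" by (rule cancel_I)
    have t1: "\<pi>^?l1 dvd (mtrace (mmul A B'') - mtrace (mmul A B'))"
      by (rule mcong_tr[OF mcong_multL[OF BB]])
    have "mtrace (mmul A B') = mtrace (mmul (mmul (mmul ?gi A) g) B)"
      unfolding B'_def by (metis mmul_assoc tr_comm)
    moreover have "mc ?l1 (mmul (mmul ?gi A) g) A"
    proof -
      have "mmul (mmul ?gi A) g = mmul ?gi (mmul A g)" by (simp add: mmul_assoc)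
      also have "mc ?l1 \<dots> (mmul ?gi (mmul g A))" by (intro mcong_multL mcong_sym[OF c])
      also have "mmul ?gi (mmul g A) = mmul (mmul ?gi g) A" by (simp add: mmul_assoc)
      also have "mc ?l1 \<dots> (mmul mone A)" by (intro mcong_multR mcong_mono[OF l1l] minv(3)[OF g])
      finally show ?thesis by simp
    qed
    then have "\<pi>^?l1 dvd (mtrace (mmul (mmul (mmul ?gi A) g) B) - mtrace (mmul A B))"
      by (rule mcong_tr[OF mcong_multR])
    ultimately have t2: "\<pi>^?l1 dvd (mtrace (mmul A B'') - mtrace (mmul A B))"
      using t1 ctrans by metis
    have "\<pi>^?l2 * \<pi>^?l1 dvd \<pi>^?l2 * (mtrace (mmul A B'') - mtrace (mmul A B))"
      using t2 by (rule mult_dvd_mono[OF dvd_refl])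
    then have t3: "\<pi>^l dvd (\<pi>^?l2 * mtrace (mmul A B'') - \<pi>^?l2 * mtrace (mmul A B))"
      using half by (metis power_add right_diff_distrib)
    have pR: "\<pi>^?l2 \<in> R u" using pi_in by (intro Rset_O Opow)
    have "\<psi> (\<pi>^?l2 * mtrace (mmul A B'')) = \<psi> (\<pi>^?l2 * mtrace (mmul A B))"
      by (intro per t3 Rset_mult pR ent_tr ent_mmul A sB''(1) sB(1))
    then show ?thesis using sB(3) sB''(3) unfolding k'_def by simp
  qed
  then show ?thesis unfolding stabS_def using g by blast
qed

lemma stab_mult: assumes g1: "g1 \<in> stabS u Ov \<pi> gal l \<psi> A" and g2: "g2 \<in> stabS u Ov \<pi> gal l \<psi> A"
  shows "mmul g1 g2 \<in> stabS u Ov \<pi> gal l \<psi> A"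
proof -
  let ?P = "psiA u Ov \<pi> l \<psi> A"
  have G1: "g1 \<in> G u l" and G2: "g2 \<in> G u l" using g1 g2 unfolding stabS_def by auto
  have s1: "\<And>k. k \<in> K u l (ceil_half l) \<Longrightarrow> ?P (mmul (mmul g1 k) (mi u l g1)) = ?P k"
    and s2: "\<And>k. k \<in> K u l (ceil_half l) \<Longrightarrow> ?P (mmul (mmul g2 k) (mi u l g2)) = ?P k"
    using g1 g2 unfolding stabS_def by auto
  have "?P (mmul (mmul (mmul g1 g2) k) (mi u l (mmul g1 g2))) = ?P k" if k: "k \<in> K u l (ceil_half l)" for k
  proof -
    let ?k' = "mmul (mmul g2 k) (mi u l g2)"
    have k': "?k' \<in> K u l (ceil_half l)" by (rule conjK_mem[OF G2 k])
    have "mc l (mmul (mmul (mmul g1 g2) k) (mi u l (mmul g1 g2)))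
               (mmul (mmul (mmul g1 g2) k) (mmul (mi u l g2) (mi u l g1)))"
      by (intro mcong_multL minv_mult G1 G2)
    also have "mmul (mmul (mmul g1 g2) k) (mmul (mi u l g2) (mi u l g1)) = mmul (mmul g1 ?k') (mi u l g1)"
      by (simp add: mmul_assoc)
    finally have "?P (mmul (mmul (mmul g1 g2) k) (mi u l (mmul g1 g2))) = ?P (mmul (mmul g1 ?k') (mi u l g1))"
      by (rule psiA_cong)
    also have "\<dots> = ?P ?k'" by (rule s1[OF k'])
    also have "\<dots> = ?P k" by (rule s2[OF k])
    finally show ?thesis .
  qed
  then show ?thesis unfolding stabS_def using G_mult[OF G1 G2] by blast
qed

lemma stab_G: "g \<in> stabS u Ov \<pi> gal l \<psi> A \<Longrightarrow> g \<in> G u l"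
  unfolding stabS_def by auto

end

lemma dvd_comb: "(X::'a::comm_ring_1) = c1*t1 + c2*t2 + c3*D + c4*T \<Longrightarrow> p dvd t1 \<Longrightarrow> p dvd t2 \<Longrightarrow> p dvd D \<Longrightarrow> p dvd T \<Longrightarrow> p dvd X"
  by (simp add: dvd_add dvd_mult)

lemma intertwA:
  fixes m1 m2 m3 m4 n1 n2 n3 n4 a :: "'a::comm_ring_1"
  assumes t1: "p^k dvd (m1+m4)" and t2: "p^k dvd (n1+n4)"
    and D: "p^k dvd ((m1*m4 - m2*m3) - (n1*n4 - n2*n3))" and T: "p^k dvd ((a*m3+m2) - (a*n3+n2))"
  shows "mcong p k (mmul (M2 (m1+n1) (a*(n3-m3)) (n3-m3) (m1+n1)) (M2 m1 m2 m3 m4))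
                   (mmul (M2 n1 n2 n3 n4) (M2 (m1+n1) (a*(n3-m3)) (n3-m3) (m1+n1)))"
proof -
  let ?t1 = "m1+m4" and ?t2 = "n1+n4" and ?D = "(m1*m4 - m2*m3) - (n1*n4 - n2*n3)" and ?T = "(a*m3+m2) - (a*n3+n2)"
  note dc = dvd_comb[OF _ t1 t2 D T]
  have e1: "p^k dvd ((m1+n1)*m1 + a*(n3-m3)*m3 - (n1*(m1+n1) + n2*(n3-m3)))"
    by (rule dc[of _ m1 "-n1" "-1" "-m3"]) (simp add: algebra_simps)
  have e2: "p^k dvd ((m1+n1)*m2 + a*(n3-m3)*m4 - (n1*(a*(n3-m3)) + n2*(m1+n1)))"
    by (rule dc[of _ "a*(n3-m3)" 0 0 "m1+n1"]) (simp add: algebra_simps)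
  have e3: "p^k dvd ((n3-m3)*m1 + (m1+n1)*m3 - (n3*(m1+n1) + n4*(n3-m3)))"
    by (rule dc[of _ 0 "-(n3-m3)" 0 0]) (simp add: algebra_simps)
  have e4: "p^k dvd ((n3-m3)*m2 + (m1+n1)*m4 - (n3*(a*(n3-m3)) + n4*(m1+n1)))"
    by (rule dc[of _ n1 "-m1" 1 n3]) (simp add: algebra_simps)
  show ?thesis using e1 e2 e3 e4 by simp
qed

lemma intertwB:
  fixes m1 m2 m3 m4 n1 n2 n3 n4 a :: "'a::comm_ring_1"
  assumes t1: "p^k dvd (m1+m4)" and t2: "p^k dvd (n1+n4)"
    and D: "p^k dvd ((m1*m4 - m2*m3) - (n1*n4 - n2*n3))" and T: "p^k dvd ((a*m3+m2) - (a*n3+n2))"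
  shows "mcong p k (mmul (M2 (a*m3-n2) (a*(n1-m1)) (n1-m1) (a*m3-n2)) (M2 m1 m2 m3 m4))
                   (mmul (M2 n1 n2 n3 n4) (M2 (a*m3-n2) (a*(n1-m1)) (n1-m1) (a*m3-n2)))"
proof -
  note dc = dvd_comb[OF _ t1 t2 D T]
  have e1: "p^k dvd ((a*m3-n2)*m1 + a*(n1-m1)*m3 - (n1*(a*m3-n2) + n2*(n1-m1)))"
    by (rule dc[of _ 0 0 0 0]) (simp add: algebra_simps)
  have e2: "p^k dvd ((a*m3-n2)*m2 + a*(n1-m1)*m4 - (n1*(a*(n1-m1)) + n2*(a*m3-n2)))"
    by (rule dc[of _ "a*n1" "-a*n1" "-a" "-n2"]) (simp add: algebra_simps)
  have e3: "p^k dvd ((n1-m1)*m1 + (a*m3-n2)*m3 - (n3*(a*m3-n2) + n4*(n1-m1)))"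
    by (rule dc[of _ "-m1" m1 1 m3]) (simp add: algebra_simps)
  have e4: "p^k dvd ((n1-m1)*m2 + (a*m3-n2)*m4 - (n3*(a*(n1-m1)) + n4*(a*m3-n2)))"
    by (rule dc[of _ "a*m3-n2" "-(a*m3-n2)" 0 "n1-m1"]) (simp add: algebra_simps)
  show ?thesis using e1 e2 e3 e4 by simp
qed

lemma commA: "mmul (M2 U (a*V) V U) (M2 0 (e*a) e 0) = mmul (M2 0 (e*a) e 0) (M2 U (a*V) V (U::'a::comm_ring_1))"
  by (simp add: algebra_simps)


context stdset begin

definition Re :: "nat \<Rightarrow> 'a \<Rightarrow> bool" where "Re k x \<longleftrightarrow> (\<exists>x0\<in>Ov. \<pi>^k dvd (x - x0))"
definition Im :: "nat \<Rightarrow> 'a \<Rightarrow> bool" where "Im k x \<longleftrightarrow> (\<exists>x0\<in>Ov. \<pi>^k dvd (x - \<theta>*x0))"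

lemma re_of: assumes "\<pi>^k dvd (x - gal x)" shows "Re k x"
proof -
  obtain p q where pq: "p\<in>Ov" "q\<in>Ov" "x = p + q*\<theta>" using dec by blast
  have "gal x = p - q*\<theta>" using pq galdef by simp
  then have "x - gal x = \<theta>*(2*q)" using pq by (simp add: algebra_simps)
  then have "\<pi>^k dvd q" using assms dvd_cancel_th dvd_cancel_2 by metis
  moreover have "x - p = q*\<theta>" using pq by simp
  ultimately show ?thesis unfolding Re_def using pq by (metis dvd_mult2)
qed

lemma im_of: assumes "\<pi>^k dvd (x + gal x)" shows "Im k x"
proof -
  obtain p q where pq: "p\<in>Ov" "q\<in>Ov" "x = p + q*\<theta>" using dec by blast
  have "gal x = p - q*\<theta>" using pq galdef by simp
  then have "x + gal x = 2*p" using pq by (simp add: algebra_simps)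
  then have "\<pi>^k dvd p" using assms dvd_cancel_2 by metis
  moreover have "x - \<theta>*q = p" using pq by (simp add: algebra_simps)
  ultimately show ?thesis unfolding Im_def using pq by metis
qed

lemma Re_add: "Re k x \<Longrightarrow> Re k y \<Longrightarrow> Re k (x + y)"
  unfolding Re_def by (metis cadd Oadd)
lemma Re_diff: "Re k x \<Longrightarrow> Re k y \<Longrightarrow> Re k (x - y)"
  unfolding Re_def by (metis cdiff Odiff)
lemma Im_add: "Im k x \<Longrightarrow> Im k y \<Longrightarrow> Im k (x + y)"
  unfolding Im_def by (metis cadd Oadd distrib_left)
lemma Im_diff: "Im k x \<Longrightarrow> Im k y \<Longrightarrow> Im k (x - y)"
  unfolding Im_def by (metis cdiff Odiff right_diff_distrib)
lemma Im_smult: assumes "a\<in>Ov" "Im k x" shows "Im k (a*x)"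
proof -
  obtain x0 where "x0\<in>Ov" "\<pi>^k dvd (x - \<theta>*x0)" using assms unfolding Im_def by blast
  moreover have "a*x - \<theta>*(a*x0) = a*(x - \<theta>*x0)" by (simp add: algebra_simps)
  ultimately show ?thesis unfolding Im_def using assms by (metis Omult dvd_mult)
qed
lemma th_Im: assumes "Im k x" shows "Re k (\<theta>*x)"
proof -
  obtain x0 where "x0\<in>Ov" "\<pi>^k dvd (x - \<theta>*x0)" using assms unfolding Im_def by blast
  moreover have "\<theta>*x - \<theta>^2*x0 = \<theta>*(x - \<theta>*x0)" by (simp add: algebra_simps power2_eq_square)
  ultimately show ?thesis unfolding Re_def by (metis Omult th2_in dvd_mult)
qed
lemma th_Re: assumes "Re k x" shows "Im k (\<theta>*x)"
proof -
  obtain x0 where "x0\<in>Ov" "\<pi>^k dvd (x - x0)" using assms unfolding Re_def by blast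
  moreover have "\<theta>*x - \<theta>*x0 = \<theta>*(x - x0)" by (simp add: algebra_simps)
  ultimately show ?thesis unfolding Im_def by (metis dvd_mult)
qed

lemma pidvd: "k \<ge> 1 \<Longrightarrow> \<pi>^k dvd x \<Longrightarrow> \<pi> dvd x"
  using pow_dvd_mono[of 1 k] by simp

lemma NS_GU: assumes k: "k \<ge> 1" and x: "Re k x" and y: "Im k y" and a: "a\<in>Ov" "\<not> \<pi> dvd a" "square_mod Ov \<pi> 1 a"
  and d: "\<pi> dvd (x^2 - a*y^2)" shows "\<pi> dvd x \<and> \<pi> dvd y"
proof -
  obtain x0 where x0: "x0\<in>Ov" "\<pi> dvd (x - x0)" using x k pidvd unfolding Re_def by blast
  obtain y0 where y0: "y0\<in>Ov" "\<pi> dvd (y - \<theta>*y0)" using y k pidvd unfolding Im_def by blast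
  obtain s where s: "s\<in>Ov" "\<pi> dvd (a - s^2)" using a unfolding square_mod_def by auto
  have "\<pi> dvd (x^2 - a*y^2) - (x0^2 - a*(\<theta>*y0)^2)"
    using x0 y0 by (simp only: power2_eq_square) (intro cdiff cmul crefl; assumption)
  then have "\<pi> dvd (x0^2 - a*(\<theta>*y0)^2)" using d by (metis dvd_diff_right_iff dvd_diff diff_diff_cancel)
  moreover have "\<pi> dvd (a*(\<theta>*y0)^2 - s^2*(\<theta>*y0)^2)" using s(2) by (metis dvd_mult2 left_diff_distrib)
  ultimately have "\<pi> dvd ((x0^2 - a*(\<theta>*y0)^2) + (a*(\<theta>*y0)^2 - s^2*(\<theta>*y0)^2))" by (rule dvd_add)
  moreover have "(x0^2 - a*(\<theta>*y0)^2) + (a*(\<theta>*y0)^2 - s^2*(\<theta>*y0)^2) = x0^2 - \<theta>^2*(s*y0)^2"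
    by (simp add: algebra_simps power2_eq_square)
  ultimately have "\<pi> dvd (x0^2 - \<theta>^2*(s*y0)^2)" by simp
  from NS[OF th2_in th2_nonsq x0(1) _ this] s x0 y0 have xs: "\<pi> dvd x0" "\<pi> dvd s*y0" by auto
  have "\<not> \<pi> dvd s"
  proof
    assume "\<pi> dvd s" then have "\<pi> dvd s^2" by (simp add: power2_eq_square)
    then have "\<pi> dvd (a - s^2) + s^2" using s dvd_add by blast
    then show False using a by simp
  qed
  then have "\<pi> dvd y0" using pi_prime[OF s(1) y0(1) xs(2)] by simp
  then have "\<pi> dvd \<theta>*y0" by simp
  then have "\<pi> dvd y" using y0 by (metis dvd_add diff_add_cancel)
  moreover have "\<pi> dvd x" using xs x0 by (metis dvd_add diff_add_cancel)
  ultimately show ?thesis by simp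
qed

end

context stdset begin

lemma eps_cancel: "\<pi>^k dvd eps u \<theta> * y \<Longrightarrow> \<pi>^k dvd y"
proof (cases u)
  case True
  assume "\<pi>^k dvd eps u \<theta> * y" then have "\<pi>^k dvd \<theta> * y" using True unfolding eps_def by simp
  then show ?thesis by (rule dvd_cancel_th)
next
  case False
  assume "\<pi>^k dvd eps u \<theta> * y" then show ?thesis using False unfolding eps_def by simp
qed

lemma eps_notdvd: "\<not> \<pi> dvd eps u \<theta>"
proof
  assume "\<pi> dvd eps u \<theta>"
  then have "\<pi>^1 dvd eps u \<theta> * 1" by simp
  then have "\<pi>^1 dvd 1" by (rule eps_cancel)
  then show False using pi_not_dvd_1 by simp
qed

lemma A_ent: "a \<in> Ov \<Longrightarrow> entries (M2 0 (eps u \<theta> * a) (eps u \<theta>) 0) \<subseteq> R u"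
  unfolding Rset_def eps_def by auto

lemma conjM: assumes g: "g \<in> G u l"
  shows "mc l (mmul g A) (mmul (mmul (mmul g A) (mi u l g)) g)"
proof -
  have "mmul (mmul (mmul g A) (mi u l g)) g = mmul (mmul g A) (mmul (mi u l g) g)" by (simp add: mmul_assoc)
  also have "mc l \<dots> (mmul (mmul g A) mone)" by (intro mcong_multL minv(3)[OF g])
  finally have X: "mc l (mmul (mmul (mmul g A) (mi u l g)) g) (mmul g A)" by simp
  show ?thesis by (rule mcong_sym[OF X])
qed

lemma M_inv: assumes g: "g \<in> G u l"
  shows "\<pi>^l dvd (mtrace A - mtrace (mmul (mmul g A) (mi u l g)))"
        "\<pi>^l dvd (det2 A - det2 (mmul (mmul g A) (mi u l g)))"
  using conj_inv[OF conjM[OF g] minv(2,3)[OF g]] by auto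

lemma skewM: assumes g: "g \<in> G True l" and b: "b\<in>Ov"
  shows "mc l (st (mmul (mmul g (M2 0 (\<theta>*b) \<theta> 0)) (mi True l g))) (msmult (-1) (mmul (mmul g (M2 0 (\<theta>*b) \<theta> 0)) (mi True l g)))"
proof -
  let ?A = "M2 0 (\<theta>*b) \<theta> 0" and ?gi = "mi True l g"
  have gu: "mc l (mmul (st g) g) mone" using g unfolding G_def' by blast
  have sg: "mc l (st g) ?gi" by (rule star_inv[OF gu minv(2)[OF g]])
  have sgi: "mc l (st ?gi) g" using mcong_sym[OF mstar_cong[OF sg]] by simp
  have sA: "st ?A = msmult (-1) ?A" using b by simp
  have "st (mmul (mmul g ?A) ?gi) = mmul (st ?gi) (mmul (st ?A) (st g))" by (simp add: mstar_mult)
  also have "mc l \<dots> (mmul g (mmul (st ?A) ?gi))" by (intro mcong_mult sgi sg mcong_refl)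
  also have "mmul g (mmul (st ?A) ?gi) = mmul g (mmul (msmult (-1) ?A) ?gi)" by (simp only: sA)
  also have "\<dots> = msmult (-1) (mmul (mmul g ?A) ?gi)" by (simp only: smult_mmul mmul_assoc)
  finally show ?thesis .
qed

lemma entries_GU: assumes g: "g \<in> G True l" and b: "b\<in>Ov" and k: "k \<le> l"
  and M: "mmul (mmul g (M2 0 (\<theta>*b) \<theta> 0)) (mi True l g) = M2 m1 m2 m3 m4"
  shows "Re k m1" "Im k m2" "Im k m3"
proof -
  have sk: "mc k (M2 (gal m4) (gal m2) (gal m3) (gal m1)) (M2 (-m1) (-m2) (-m3) (-m4))"
    using mcong_mono[OF k skewM[OF g b]] unfolding M by simp
  have "\<pi>^l dvd (- m1 - m4)"
    using M_inv(1)[OF g, of "M2 0 (\<theta>*b) \<theta> 0"] unfolding M by simp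
  moreover have "- m1 - m4 = - (m1 + m4)" by simp
  ultimately have "\<pi>^l dvd - (m1 + m4)" by metis
  then have tr: "\<pi>^l dvd (m1 + m4)" by (simp only: dvd_minus_iff)
  then have trk: "\<pi>^k dvd (m1 + m4)" using pow_dvd_mono k by blast
  have "\<pi>^k dvd (gal m1 - - m4)" using sk by simp
  then have "\<pi>^k dvd (gal m1 + m4)" by simp
  then have "\<pi>^k dvd ((m1 + m4) - (gal m1 + m4))" using trk dvd_diff by blast
  moreover have "(m1 + m4) - (gal m1 + m4) = m1 - gal m1" by simp
  ultimately show "Re k m1" by (intro re_of) simp
  have "\<pi>^k dvd (gal m2 - - m2)" using sk by simp
  then show "Im k m2" by (intro im_of) (simp add: algebra_simps)
  have "\<pi>^k dvd (gal m3 - - m3)" using sk by simp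
  then show "Im k m3" by (intro im_of) (simp add: algebra_simps)
qed

end

lemma mmul_zero: "mmul mzero A = mzero" "mmul A mzero = (mzero :: 'a::comm_ring_1 m2)"
  by (cases A; simp add: mzero_def)+

lemma neg_sum: "(p::'a::comm_ring_1) dvd (- x - y) \<Longrightarrow> p dvd (x + y)"
proof -
  assume "p dvd (- x - y)"
  moreover have "- x - y = - (x + y)" by simp
  ultimately have "p dvd - (x + y)" by metis
  then show ?thesis by (simp only: dvd_minus_iff)
qed

context stdset begin

lemma dvd_from_eq: "x = y \<Longrightarrow> p dvd y \<Longrightarrow> p dvd x" by simp

lemma degen:
  assumes k1: "1 \<le> k" "k \<le> l" and g: "g \<in> G u l" and a: "a\<in>Ov" "\<not> \<pi> dvd a" and b: "b \<in> Ov"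
    and M: "mmul (mmul g (M2 0 (eps u \<theta> * b) (eps u \<theta>) 0)) (mi u l g) = M2 m1 m2 m3 m4"
    and d1: "\<pi> dvd (m1+n1)" "\<pi> dvd (n3-m3)" "\<pi> dvd (a*m3-n2)" "\<pi> dvd (n1-m1)"
    and T: "\<pi> dvd ((a*m3+m2) - (a*n3+n2))"
    and m3: "\<not> u \<Longrightarrow> m3 \<in> Ov" "u \<Longrightarrow> Im k m3"
    and tyA: "\<not> u \<Longrightarrow> \<not> square_mod Ov \<pi> 1 a" "u \<Longrightarrow> square_mod Ov \<pi> 1 a"
    and A2t: "\<pi> dvd b \<or> (\<not> \<pi> dvd b \<and> (\<not> u \<longrightarrow> square_mod Ov \<pi> 1 b) \<and> (u \<longrightarrow> \<not> square_mod Ov \<pi> 1 b))"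
  shows False
proof -
  define e where "e = eps u \<theta>"
  let ?A = "M2 0 (e * b) e 0"
  have l1: "1 \<le> l" using k1 by simp
  have "\<pi>^l dvd (mtrace ?A - mtrace (M2 m1 m2 m3 m4))" "\<pi>^l dvd (det2 ?A - det2 (M2 m1 m2 m3 m4))"
    using M_inv[OF g, of ?A] M unfolding e_def by auto
  then have tr0: "\<pi> dvd (0 - (m1 + m4))" and de0: "\<pi> dvd ((0*0 - (e*b)*e) - (m1*m4 - m2*m3))"
    using pidvd[OF l1] by auto
  have tr: "\<pi> dvd (m1 + m4)" using tr0 by (intro neg_sum) simp
  have "\<pi> dvd 2*m1" by (rule dvd_from_eq[of _ "(m1+n1) - (n1-m1)"]) (simp, intro dvd_diff d1)
  then have "\<pi>^1 dvd 2*m1" by simp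
  from dvd_cancel_2[OF this] have pm1: "\<pi> dvd m1" by simp
  have pm4: "\<pi> dvd m4" by (rule dvd_from_eq[of _ "(m1+m4) - m1"]) (simp, intro dvd_diff tr pm1)
  have p23: "\<pi> dvd (m2 - a*m3)"
    by (rule dvd_from_eq[of _ "((a*m3+m2) - (a*n3+n2)) + a*(n3-m3) - (a*m3-n2)"])
      (simp add: algebra_simps, intro dvd_diff dvd_add T dvd_mult d1)
  have pdet: "\<pi> dvd (m1*m4 - m2*m3 + a*m3^2)"
    by (rule dvd_from_eq[of _ "m1*m4 - (m2 - a*m3)*m3"])
      (simp add: algebra_simps power2_eq_square, intro dvd_diff dvd_mult dvd_mult2 pm1 p23)
  have key: "\<pi> dvd (e*e*b - a*m3^2)"
    by (rule dvd_from_eq[of _ "- (((0*0 - (e*b)*e) - (m1*m4 - m2*m3)) + (m1*m4 - m2*m3 + a*m3^2))"])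
      (simp add: algebra_simps, simp only: dvd_minus_iff, intro dvd_add de0 pdet)
  have pm3: "\<pi> dvd m3"
  proof (cases u)
    case False
    then have e1: "e = 1" unfolding e_def eps_def by simp
    have m3O: "m3 \<in> Ov" using m3 False by blast
    have kb: "\<pi> dvd (b - a*m3^2)" using key e1 by simp
    show ?thesis
    proof (cases "\<pi> dvd b")
      case True
      have "\<pi> dvd a*m3^2" by (rule dvd_from_eq[of _ "b - (b - a*m3^2)"]) (simp, intro dvd_diff True kb)
      then have "\<pi> dvd m3^2" using pi_prime[of a "m3^2"] a m3O by auto
      then show ?thesis using pi_dvd_sq m3O by blast
    next
      case nb: False
      then have sb: "square_mod Ov \<pi> 1 b" using A2t False by blast
      then obtain y where y: "y\<in>Ov" "\<pi> dvd (b - y^2)" unfolding square_mod_def by auto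
      show ?thesis
      proof (rule ccontr)
        assume "\<not> \<pi> dvd m3"
        then obtain w where w: "w\<in>Ov" "m3*w = 1" using notdvd_inv m3O by blast
        have "\<pi>^1 dvd (a - (y*w)^2)"
        proof (rule dvd_from_eq[of _ "w^2*((a*m3^2 - b) + (b - y^2))"])
          have "a = a*(m3*w)^2" using w by simp
          then show "a - (y*w)^2 = w^2*((a*m3^2 - b) + (b - y^2))" by (simp add: algebra_simps power2_eq_square)
          have "\<pi> dvd (a*m3^2 - b)" using kb by (metis dvd_minus_iff minus_diff_eq)
          then have "\<pi> dvd ((a*m3^2 - b) + (b - y^2))" using y dvd_add by blast
          then show "\<pi>^1 dvd w^2*((a*m3^2 - b) + (b - y^2))" by (simp only: power_one_right dvd_mult)
        qed
        then have "square_mod Ov \<pi> 1 a" unfolding square_mod_def using y w by blast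
        then show False using tyA False by blast
      qed
    qed
  next
    case True
    then have e1: "e = \<theta>" unfolding e_def eps_def by simp
    obtain w where w: "w\<in>Ov" "\<pi> dvd (m3 - \<theta>*w)" using m3(2)[OF True] pidvd[OF k1(1)] unfolding Im_def by blast
    have "\<pi> dvd (a*m3^2 - a*(\<theta>*w)^2)" using w by (simp only: power2_eq_square) (intro cmul crefl; assumption)
    then have "\<pi> dvd ((\<theta>*\<theta>*b - a*m3^2) + (a*m3^2 - a*(\<theta>*w)^2))" using key e1 dvd_add by blast
    then have "\<pi> dvd \<theta>^2 * (b - a*w^2)" by (simp add: algebra_simps power2_eq_square)
    then have "\<pi>^1 dvd \<theta>^2 * (b - a*w^2)" by simp
    from dvd_cancel_th2[OF this] have kb: "\<pi> dvd (b - a*w^2)" by simp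
    have pw: "\<pi> dvd w"
    proof (cases "\<pi> dvd b")
      case True
      have "\<pi> dvd a*w^2" by (rule dvd_from_eq[of _ "b - (b - a*w^2)"]) (simp, intro dvd_diff True kb)
      then have "\<pi> dvd w^2" using pi_prime[of a "w^2"] a w by auto
      then show ?thesis using pi_dvd_sq w by blast
    next
      case nb: False
      then have nsb: "\<not> square_mod Ov \<pi> 1 b" using A2t True by blast
      obtain s where s: "s\<in>Ov" "\<pi> dvd (a - s^2)" using tyA(2)[OF True] unfolding square_mod_def by auto
      have "\<pi> dvd (b - (s*w)^2)"
        by (rule dvd_from_eq[of _ "(b - a*w^2) + (a - s^2)*w^2"]) (simp add: algebra_simps power2_eq_square, intro dvd_add kb dvd_mult2 s(2))
      then have "\<pi>^1 dvd (b - (s*w)^2)" by simp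
      then show ?thesis using nsb s w unfolding square_mod_def by blast
    qed
    show ?thesis by (rule dvd_from_eq[of _ "(m3 - \<theta>*w) + \<theta>*w"]) (simp, intro dvd_add w(2) dvd_mult pw)
  qed
  have pm2: "\<pi> dvd m2" by (rule dvd_from_eq[of _ "(m2 - a*m3) + a*m3"]) (simp, intro dvd_add p23 dvd_mult pm3)
  have M0: "mc 1 (M2 m1 m2 m3 m4) mzero" using pm1 pm2 pm3 pm4 by (simp add: mzero_def)
  let ?gi = "mi u l g"
  have "mc l ?A (mmul (mmul mone ?A) mone)" by simp
  also have "mc l \<dots> (mmul (mmul (mmul ?gi g) ?A) (mmul ?gi g))"
    by (intro mcong_mult mcong_refl mcong_sym[OF minv(3)[OF g]])
  also have "mmul (mmul (mmul ?gi g) ?A) (mmul ?gi g) = mmul (mmul ?gi (M2 m1 m2 m3 m4)) g"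
    unfolding M[symmetric] e_def by (simp add: mmul_assoc)
  finally have "mc 1 ?A (mmul (mmul ?gi (M2 m1 m2 m3 m4)) g)" using mcong_mono[OF l1] by blast
  also have "mc 1 \<dots> (mmul (mmul ?gi mzero) g)" by (intro mcong_multR mcong_multL M0)
  finally have "mc 1 ?A mzero" by (simp add: mmul_zero)
  then have "\<pi> dvd e" by (simp add: mzero_def)
  then show False using eps_notdvd unfolding e_def by blast
qed

end

context stdset begin

lemma mk_c1_GL:
  assumes u: "\<not> u" and a: "a \<in> Ov" and UV: "U \<in> Ov" "V \<in> Ov" and d: "\<not> \<pi> dvd (U*U - a*V*V)"
  shows "M2 U (a*V) V U \<in> G u l"
proof -
  let ?c = "M2 U (a*V) V U"
  have dO: "U*U - a*V*V \<in> Ov" using a UV by (intro Odiff Omult)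
  obtain di where di: "di \<in> Ov" "(U*U - a*V*V)*di = 1" using notdvd_inv[OF dO d] by blast
  let ?h = "M2 (di*U) (-(di*(a*V))) (-(di*V)) (di*U)"
  have e1: "mmul ?c ?h = M2 ((U*U - a*V*V)*di) 0 0 ((U*U - a*V*V)*di)" by (simp add: algebra_simps)
  have e2: "mmul ?h ?c = M2 ((U*U - a*V*V)*di) 0 0 ((U*U - a*V*V)*di)" by (simp add: algebra_simps)
  have "mmul ?c ?h = mone" "mmul ?h ?c = mone" unfolding e1 e2 di(2) mone_def by simp_all
  moreover have "entries ?c \<subseteq> R u" "entries ?h \<subseteq> R u" using u a UV di unfolding Rset_def by auto
  ultimately show ?thesis unfolding G_def' using u by (metis mcong_refl)
qed

lemma mk_c1_GU:
  assumes u: "u" and a: "a \<in> Ov" "\<not> \<pi> dvd a" "square_mod Ov \<pi> 1 a" and k: "1 \<le> k" "k \<le> l"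
    and UV: "Re k U" "Im k V" and d: "\<not> \<pi> dvd (U*U - a*V*V)"
    and tw: "mc k (mmul (M2 U (a*V) V U) M) (mmul N (M2 U (a*V) V U))"
  shows "\<exists>c1. c1 \<in> G u l \<and> (\<forall>e. mmul c1 (M2 0 (e*a) e 0) = mmul (M2 0 (e*a) e 0) c1) \<and> mc k (mmul c1 M) (mmul N c1)"
proof -
  obtain u0 where u0: "u0\<in>Ov" "\<pi>^k dvd (U - u0)" using UV unfolding Re_def by blast
  obtain v0 where v0: "v0\<in>Ov" "\<pi>^k dvd (V - \<theta>*v0)" using UV unfolding Im_def by blast
  let ?c = "M2 U (a*V) V U" and ?cz = "M2 u0 (a*(\<theta>*v0)) (\<theta>*v0) u0"
  have "\<pi>^k dvd (a*V - a*(\<theta>*v0))" using v0(2) by (metis dvd_mult right_diff_distrib)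
  then have cc0: "mc k ?c ?cz" using u0 v0 by simp
  have tw0: "mc k (mmul ?cz M) (mmul N ?cz)"
  proof -
    have "mc k (mmul ?cz M) (mmul ?c M)" by (intro mcong_multR mcong_sym[OF cc0])
    also have "mc k \<dots> (mmul N ?c)" by (rule tw)
    also have "mc k \<dots> (mmul N ?cz)" by (intro mcong_multL cc0)
    finally show ?thesis .
  qed
  define lam where "lam = u0*u0 - a*(\<theta>*v0)*(\<theta>*v0)"
  have "\<pi>^k dvd ((U*U - a*V*V) - lam)" unfolding lam_def
    by (rule cdiff[OF cmul[OF u0(2) u0(2)] cmul[OF cmul[OF crefl v0(2)] v0(2)]])
  then have "\<pi> dvd ((U*U - a*V*V) - lam)" using pidvd[OF k(1)] by blast
  then have nl: "\<not> \<pi> dvd lam" using d by (metis dvd_add diff_add_cancel)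
  obtain s where s: "s\<in>Ov" "\<pi>^l dvd (a - s^2)"
    using sq_lift[OF a] unfolding square_mod_def by blast
  define z where "z = u0 + s*\<theta>*v0"
  define Nz where "Nz = u0*u0 - s*s*\<theta>^2*v0*v0"
  have NzO: "Nz \<in> Ov" unfolding Nz_def using u0 s v0 by (intro Odiff Omult th2_in)
  have gz: "gal z = u0 - s*\<theta>*v0" unfolding z_def using u0 s v0 by simp
  have zNz: "z * gal z = Nz" unfolding gz unfolding z_def Nz_def by (simp add: algebra_simps power2_eq_square)
  have lN: "\<pi>^l dvd (lam - Nz)"
    by (rule dvd_from_eq[of _ "-((a - s^2)*(\<theta>^2*v0*v0))"]) (simp add: lam_def Nz_def algebra_simps power2_eq_square, simp only: dvd_minus_iff, intro dvd_mult2 s(2))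
  have "\<pi> dvd (lam - Nz)" using lN pidvd k by (metis le_trans)
  then have nN: "\<not> \<pi> dvd Nz" using nl by (metis dvd_add diff_add_cancel)
  obtain Ni where Ni: "Ni \<in> Ov" "Nz*Ni = 1" using notdvd_inv[OF NzO nN] by blast
  define mu where "mu = gal z * Ni"
  have gmu: "gal mu * mu = Ni"
  proof -
    have "gal mu * mu = (z * gal z) * Ni * Ni" unfolding mu_def using Ni by (simp add: algebra_simps)
    also have "\<dots> = Ni" unfolding zNz using Ni(2) by simp
    finally show ?thesis .
  qed
  have sc0: "st ?cz = M2 u0 (-(a*(\<theta>*v0))) (-(\<theta>*v0)) u0" using u0 v0 a by simp
  have p1: "mmul (st ?cz) ?cz = msmult lam mone" unfolding sc0 lam_def by (simp add: mone_def algebra_simps)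
  have p2: "mmul ?cz (st ?cz) = msmult lam mone" unfolding sc0 lam_def by (simp add: mone_def algebra_simps)
  define c1 where "c1 = msmult mu ?cz"
  have sc1: "st c1 = msmult (gal mu) (st ?cz)" unfolding c1_def by (rule mstar_smult)
  have "mc l (msmult (Ni*lam) mone) (msmult 1 mone)"
  proof (rule mcong_smult2)
    have "Ni*lam - 1 = Ni*(lam - Nz)" using Ni(2) by (simp add: algebra_simps)
    then show "\<pi>^l dvd (Ni*lam - 1)" using lN by simp
  qed
  then have one: "mc l (msmult (Ni*lam) mone) mone" by (simp add: smult_one)
  have q1: "mmul (st c1) c1 = msmult (Ni*lam) mone"
    unfolding c1_def mstar_smult smult_mmul p1 smult_smult gmu[symmetric] by (simp add: algebra_simps)
  have q2: "mmul c1 (st c1) = msmult (Ni*lam) mone"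
    unfolding c1_def mstar_smult smult_mmul p2 smult_smult gmu[symmetric] by (simp add: algebra_simps)
  have G: "c1 \<in> G u l" unfolding G_def' using u one q1 q2 unfolding Rset_def by (auto intro!: exI[of _ "st c1"])
  have cm: "mmul c1 (M2 0 (e*a) e 0) = mmul (M2 0 (e*a) e 0) c1" for e
    unfolding c1_def smult_mmul commA by simp
  have "mc k (mmul c1 M) (mmul N c1)" unfolding c1_def smult_mmul by (intro mcong_smult tw0)
  then show ?thesis using G cm by blast
qed

lemma mk_c2:
  assumes g: "g \<in> G u l" and h: "h \<in> G u l" and c1: "c1 \<in> G u l" and k: "k \<le> l"
    and tw: "mc k (mmul c1 (mmul (mmul g A) (mi u l g))) (mmul (mmul (mmul h A) (mi u l h)) c1)"
  shows "\<exists>c2. c2 \<in> G u l \<and> mc k (mmul c2 A) (mmul A c2) \<and> mc l h (mmul (mmul c1 g) c2)"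
proof -
  let ?gi = "mi u l g" and ?ci = "mi u l c1" and ?hi = "mi u l h"
  let ?M = "mmul (mmul g A) ?gi" and ?N = "mmul (mmul h A) ?hi"
  define c2 where "c2 = mmul (mmul ?gi ?ci) h"
  have G: "c2 \<in> G u l" unfolding c2_def by (intro G_mult minv(4) g c1 h)
  have "mmul (mmul c1 g) c2 = mmul c1 (mmul (mmul g ?gi) (mmul ?ci h))" unfolding c2_def by (simp only: mmul_assoc)
  also have "mc l \<dots> (mmul c1 (mmul mone (mmul ?ci h)))" by (intro mcong_multL mcong_multR minv(2)[OF g])
  also have "mmul c1 (mmul mone (mmul ?ci h)) = mmul (mmul c1 ?ci) h" by (simp add: mmul_assoc)
  also have "mc l \<dots> (mmul mone h)" by (intro mcong_multR minv(2)[OF c1])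
  finally have H0: "mc l (mmul (mmul c1 g) c2) h" by simp
  have H: "mc l h (mmul (mmul c1 g) c2)" by (rule mcong_sym[OF H0])
  have cN: "mc k (mmul ?ci ?N) (mmul ?M ?ci)"
  proof -
    have "mc k (mmul ?N mone) (mmul ?N (mmul c1 ?ci))"
      by (intro mcong_multL mcong_mono[OF k] mcong_sym[OF minv(2)[OF c1]])
    then have "mc k (mmul ?ci ?N) (mmul ?ci (mmul ?N (mmul c1 ?ci)))"
      using mcong_multL by fastforce
    also have "mmul ?ci (mmul ?N (mmul c1 ?ci)) = mmul ?ci (mmul (mmul ?N c1) ?ci)" by (simp only: mmul_assoc)
    also have "mc k \<dots> (mmul ?ci (mmul (mmul c1 ?M) ?ci))" by (intro mcong_multL mcong_multR mcong_sym[OF tw])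
    also have "mmul ?ci (mmul (mmul c1 ?M) ?ci) = mmul (mmul ?ci c1) (mmul ?M ?ci)" by (simp only: mmul_assoc)
    also have "mc k \<dots> (mmul mone (mmul ?M ?ci))" by (intro mcong_multR mcong_mono[OF k] minv(3)[OF c1])
    finally show ?thesis by simp
  qed
  have gM: "mc l (mmul ?gi ?M) (mmul A ?gi)"
  proof -
    have "mmul ?gi ?M = mmul (mmul ?gi g) (mmul A ?gi)" by (simp only: mmul_assoc)
    also have "mc l \<dots> (mmul mone (mmul A ?gi))" by (intro mcong_multR minv(3)[OF g])
    finally show ?thesis by simp
  qed
  have hA: "mc l (mmul h A) (mmul ?N h)" by (rule conjM[OF h])
  have "mmul c2 A = mmul ?gi (mmul ?ci (mmul h A))" unfolding c2_def by (simp only: mmul_assoc)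
  also have "mc k \<dots> (mmul ?gi (mmul ?ci (mmul ?N h)))" by (intro mcong_multL mcong_mono[OF k hA])
  also have "mmul ?gi (mmul ?ci (mmul ?N h)) = mmul ?gi (mmul (mmul ?ci ?N) h)" by (simp only: mmul_assoc)
  also have "mc k \<dots> (mmul ?gi (mmul (mmul ?M ?ci) h))" by (intro mcong_multL mcong_multR cN)
  also have "mmul ?gi (mmul (mmul ?M ?ci) h) = mmul (mmul ?gi ?M) (mmul ?ci h)" by (simp only: mmul_assoc)
  also have "mc k \<dots> (mmul (mmul A ?gi) (mmul ?ci h))" by (intro mcong_multR mcong_mono[OF k gM])
  also have "mmul (mmul A ?gi) (mmul ?ci h) = mmul A c2" unfolding c2_def by (simp only: mmul_assoc)
  finally show ?thesis using G H by blast
qed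

end

context stdset begin

lemma floor_half_bounds: "2 \<le> l \<Longrightarrow> 1 \<le> floor_half l \<and> floor_half l \<le> l"
  unfolding floor_half_def by auto

lemma M_facts: assumes g: "g \<in> G u l" and l: "1 \<le> l" and k: "k \<le> l"
  and M: "mmul (mmul g (M2 0 (e*b) e 0)) (mi u l g) = M2 m1 m2 m3 m4"
  shows "\<pi>^k dvd (m1 + m4)" "\<pi>^k dvd ((0*0 - (e*b)*e) - (m1*m4 - m2*m3))"
proof -
  have "\<pi>^l dvd (mtrace (M2 0 (e*b) e 0) - mtrace (M2 m1 m2 m3 m4))" "\<pi>^l dvd (det2 (M2 0 (e*b) e 0) - det2 (M2 m1 m2 m3 m4))"
    using M_inv[OF g, of "M2 0 (e*b) e 0"] M by auto
  then have "\<pi>^k dvd (mtrace (M2 0 (e*b) e 0) - mtrace (M2 m1 m2 m3 m4))" "\<pi>^k dvd (det2 (M2 0 (e*b) e 0) - det2 (M2 m1 m2 m3 m4))"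
    using pow_dvd_mono[OF k] by blast+
  then show "\<pi>^k dvd (m1 + m4)" "\<pi>^k dvd ((0*0 - (e*b)*e) - (m1*m4 - m2*m3))"
    by (auto intro: neg_sum)
qed

lemma detsmall:
  assumes k: "1 \<le> k" and a: "a \<in> Ov" "\<not> \<pi> dvd a"
    and tyA: "\<not> u \<Longrightarrow> \<not> square_mod Ov \<pi> 1 a" "u \<Longrightarrow> square_mod Ov \<pi> 1 a"
    and UV: "\<not> u \<longrightarrow> U \<in> Ov \<and> V \<in> Ov" "u \<longrightarrow> Re k U \<and> Im k V"
    and d: "\<pi> dvd (U*U - a*V*V)"
  shows "\<pi> dvd U \<and> \<pi> dvd V"
proof -
  have d2: "\<pi> dvd (U^2 - a*V^2)" using d by (simp add: power2_eq_square algebra_simps)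
  show ?thesis
  proof (cases u)
    case True then show ?thesis using NS_GU[OF k _ _ a tyA(2)[OF True] d2] UV by blast
  next
    case False then show ?thesis using NS[OF a(1) tyA(1)[OF False] _ _ d2] UV by blast
  qed
qed

lemma ex_good: "mc k (mmul (M2 U (a*V) V U) Mm) (mmul Nn (M2 U (a*V) V U)) \<Longrightarrow> \<not> \<pi> dvd (U*U - a*V*V)
  \<Longrightarrow> (\<not> u \<longrightarrow> U \<in> Ov \<and> V \<in> Ov) \<Longrightarrow> (u \<longrightarrow> Re k U \<and> Im k V) \<Longrightarrow>
  \<exists>U V. mc k (mmul (M2 U (a*V) V U) Mm) (mmul Nn (M2 U (a*V) V U))
      \<and> \<not> \<pi> dvd (U*U - a*V*V) \<and> (\<not> u \<longrightarrow> U \<in> Ov \<and> V \<in> Ov) \<and> (u \<longrightarrow> Re k U \<and> Im k V)"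
  by blast

lemma core:
  fixes u :: bool
  assumes l: "2 \<le> l" and kdef: "k = floor_half l"
    and a: "a \<in> Ov" "\<not> \<pi> dvd a" and b: "b \<in> Ov"
    and tyA: "\<not> u \<Longrightarrow> \<not> square_mod Ov \<pi> 1 a" "u \<Longrightarrow> square_mod Ov \<pi> 1 a"
    and A2t: "\<pi> dvd b \<or> (\<not> \<pi> dvd b \<and> (\<not> u \<longrightarrow> square_mod Ov \<pi> 1 b) \<and> (u \<longrightarrow> \<not> square_mod Ov \<pi> 1 b))"
    and g: "g \<in> G u l" and h: "h \<in> G u l"
    and key: "\<pi>^k dvd (mtrace (mmul (M2 0 (eps u \<theta>*a) (eps u \<theta>) 0) (mmul (mmul g (M2 0 (eps u \<theta>*b) (eps u \<theta>) 0)) (mi u l g)))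
                      - mtrace (mmul (M2 0 (eps u \<theta>*a) (eps u \<theta>) 0) (mmul (mmul h (M2 0 (eps u \<theta>*b) (eps u \<theta>) 0)) (mi u l h))))"
  shows "\<exists>c1 c2. c1 \<in> G u l \<and> mc k (mmul c1 (M2 0 (eps u \<theta>*a) (eps u \<theta>) 0)) (mmul (M2 0 (eps u \<theta>*a) (eps u \<theta>) 0) c1)
            \<and> c2 \<in> G u l \<and> mc k (mmul c2 (M2 0 (eps u \<theta>*b) (eps u \<theta>) 0)) (mmul (M2 0 (eps u \<theta>*b) (eps u \<theta>) 0) c2)
            \<and> mc l h (mmul (mmul c1 g) c2)"
proof -
  define e where "e = eps u \<theta>"
  let ?A1 = "M2 0 (e*a) e 0" and ?A2 = "M2 0 (e*b) e 0"
  have k1: "1 \<le> k" "k \<le> l" using floor_half_bounds[OF l] kdef by auto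
  have l1: "1 \<le> l" using l by simp
  obtain m1 m2 m3 m4 where M: "mmul (mmul g ?A2) (mi u l g) = M2 m1 m2 m3 m4" by (cases "mmul (mmul g ?A2) (mi u l g)")
  obtain n1 n2 n3 n4 where N: "mmul (mmul h ?A2) (mi u l h) = M2 n1 n2 n3 n4" by (cases "mmul (mmul h ?A2) (mi u l h)")
  note Mf = M_facts[OF g l1 k1(2) M] and Nf = M_facts[OF h l1 k1(2) N]
  have D: "\<pi>^k dvd ((m1*m4 - m2*m3) - (n1*n4 - n2*n3))"
    by (rule dvd_from_eq[of _ "((0*0 - (e*b)*e) - (n1*n4 - n2*n3)) - ((0*0 - (e*b)*e) - (m1*m4 - m2*m3))"])
      (simp, intro dvd_diff Mf(2) Nf(2))
  have "\<pi>^k dvd e*((a*m3+m2) - (a*n3+n2))"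
    by (rule dvd_from_eq[OF _ key[folded e_def, unfolded M N]]) (simp add: algebra_simps)
  then have T: "\<pi>^k dvd ((a*m3+m2) - (a*n3+n2))" unfolding e_def by (rule eps_cancel)
  note twA = intertwA[OF Mf(1) Nf(1) D T]
  have twB: "mc k (mmul (M2 (e*(a*m3-n2)) (a*(e*(n1-m1))) (e*(n1-m1)) (e*(a*m3-n2))) (M2 m1 m2 m3 m4))
                   (mmul (M2 n1 n2 n3 n4) (M2 (e*(a*m3-n2)) (a*(e*(n1-m1))) (e*(n1-m1)) (e*(a*m3-n2))))"
  proof -
    have eq: "M2 (e*(a*m3-n2)) (a*(e*(n1-m1))) (e*(n1-m1)) (e*(a*m3-n2)) = msmult e (M2 (a*m3-n2) (a*(n1-m1)) (n1-m1) (a*m3-n2))"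
      by (simp add: algebra_simps)
    show ?thesis unfolding eq smult_mmul by (rule mcong_smult[OF intertwB[OF Mf(1) Nf(1) D T]])
  qed
  have good: "\<exists>U V. mc k (mmul (M2 U (a*V) V U) (M2 m1 m2 m3 m4)) (mmul (M2 n1 n2 n3 n4) (M2 U (a*V) V U))
      \<and> \<not> \<pi> dvd (U*U - a*V*V) \<and> (\<not> u \<longrightarrow> U \<in> Ov \<and> V \<in> Ov) \<and> (u \<longrightarrow> Re k U \<and> Im k V)"
  proof (rule ccontr)
    assume nex: "\<not> ?thesis"
    have entM: "entries (M2 m1 m2 m3 m4) \<subseteq> R u" unfolding M[symmetric] e_def
      by (intro ent_mmul G_ent[OF g] A_ent[OF b] minv(1)[OF g])
    have entN: "entries (M2 n1 n2 n3 n4) \<subseteq> R u" unfolding N[symmetric] e_def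
      by (intro ent_mmul G_ent[OF h] A_ent[OF b] minv(1)[OF h])
    have GL: "m1 \<in> Ov \<and> m2 \<in> Ov \<and> m3 \<in> Ov \<and> m4 \<in> Ov \<and> n1 \<in> Ov \<and> n2 \<in> Ov \<and> n3 \<in> Ov \<and> n4 \<in> Ov \<and> e = 1" if nu: "\<not> u"
      using entM entN nu unfolding Rset_def e_def eps_def by auto
    have GU: "Re k m1 \<and> Im k m2 \<and> Im k m3 \<and> Re k n1 \<and> Im k n2 \<and> Im k n3 \<and> e = \<theta>" if uu: "u"
    proof -
      have e: "e = \<theta>" using uu unfolding e_def eps_def by simp
      have gT: "g \<in> G True l" "h \<in> G True l" using g h uu by auto
      have MT: "mmul (mmul g (M2 0 (\<theta>*b) \<theta> 0)) (mi True l g) = M2 m1 m2 m3 m4"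
        and NT: "mmul (mmul h (M2 0 (\<theta>*b) \<theta> 0)) (mi True l h) = M2 n1 n2 n3 n4"
        using M N uu e by auto
      show ?thesis using entries_GU[OF gT(1) b k1(2) MT] entries_GU[OF gT(2) b k1(2) NT] e by blast
    qed
    have m3f: "\<not> u \<Longrightarrow> m3 \<in> Ov" "u \<Longrightarrow> Im k m3" using GL GU by auto
    have cA: "\<not> u \<longrightarrow> m1+n1 \<in> Ov \<and> n3-m3 \<in> Ov" "u \<longrightarrow> Re k (m1+n1) \<and> Im k (n3-m3)"
      using GL GU by (auto intro: Re_add Im_diff)
    have cB: "\<not> u \<longrightarrow> e*(a*m3-n2) \<in> Ov \<and> e*(n1-m1) \<in> Ov" "u \<longrightarrow> Re k (e*(a*m3-n2)) \<and> Im k (e*(n1-m1))"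
      using GL GU a by (auto intro!: th_Im th_Re Im_diff Im_smult Re_diff)
    have dA: "\<pi> dvd ((m1+n1)*(m1+n1) - a*(n3-m3)*(n3-m3))"
    proof (rule ccontr)
      assume "\<not> ?thesis"
      from ex_good[OF twA this cA] nex show False by blast
    qed
    have dB: "\<pi> dvd ((e*(a*m3-n2))*(e*(a*m3-n2)) - a*(e*(n1-m1))*(e*(n1-m1)))"
    proof (rule ccontr)
      assume "\<not> ?thesis"
      from ex_good[OF twB this cB] nex show False by blast
    qed
    have rA: "\<pi> dvd (m1+n1) \<and> \<pi> dvd (n3-m3)" by (rule detsmall[OF k1(1) a tyA cA dA])
    have rB: "\<pi> dvd e*(a*m3-n2) \<and> \<pi> dvd e*(n1-m1)" by (rule detsmall[OF k1(1) a tyA cB dB])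
    have x1: "\<pi>^1 dvd eps u \<theta> * (a*m3-n2)" and x2: "\<pi>^1 dvd eps u \<theta> * (n1-m1)" using rB unfolding e_def by auto
    have "\<pi>^1 dvd (a*m3-n2)" "\<pi>^1 dvd (n1-m1)" using eps_cancel[OF x1] eps_cancel[OF x2] by auto
    then have dd: "\<pi> dvd (m1+n1) \<and> \<pi> dvd (n3-m3) \<and> \<pi> dvd (a*m3-n2) \<and> \<pi> dvd (n1-m1)" using rA by simp
    show False
      using degen[OF k1 g[unfolded e_def[symmetric]] a b M[unfolded e_def] _ _ _ _ _ m3f tyA A2t] dd T pidvd[OF k1(1)]
      unfolding e_def by blast
  qed
  obtain U V where tw: "mc k (mmul (M2 U (a*V) V U) (M2 m1 m2 m3 m4)) (mmul (M2 n1 n2 n3 n4) (M2 U (a*V) V U))"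
    and nd: "\<not> \<pi> dvd (U*U - a*V*V)" and c3: "\<not> u \<longrightarrow> U \<in> Ov \<and> V \<in> Ov" and c4: "u \<longrightarrow> Re k U \<and> Im k V"
    using good by blast
  have "\<exists>c1. c1 \<in> G u l \<and> mmul c1 ?A1 = mmul ?A1 c1 \<and> mc k (mmul c1 (M2 m1 m2 m3 m4)) (mmul (M2 n1 n2 n3 n4) c1)"
  proof (cases u)
    case False
    have "M2 U (a*V) V U \<in> G u l" using mk_c1_GL[OF False a(1) _ _ nd] c3 False by blast
    then show ?thesis using tw commA[of U a V e] by blast
  next
    case True
    from mk_c1_GU[OF True a tyA(2)[OF True] k1 _ _ nd tw] c4 True
    show ?thesis by blast
  qed
  then obtain c1 where c1: "c1 \<in> G u l" "mmul c1 ?A1 = mmul ?A1 c1" "mc k (mmul c1 (M2 m1 m2 m3 m4)) (mmul (M2 n1 n2 n3 n4) c1)"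
    by blast
  have tw': "mc k (mmul c1 (mmul (mmul g ?A2) (mi u l g))) (mmul (mmul (mmul h ?A2) (mi u l h)) c1)"
    unfolding M N by (rule c1(3))
  obtain c2 where c2: "c2 \<in> G u l" "mc k (mmul c2 ?A2) (mmul ?A2 c2)" "mc l h (mmul (mmul c1 g) c2)"
    using mk_c2[OF g h c1(1) k1(2) tw'] by blast
  show ?thesis unfolding e_def[symmetric] using c1 c2 by (metis mcong_refl)
qed

end

context stdset begin

lemma conj_shape:
  assumes c: "conjugate_in u Ov \<pi> gal k (M2 0 (eps u \<theta>*\<alpha>) (eps u \<theta>) 0) (M2 x (eps u \<theta>*\<sigma>) (eps u \<theta>) x)"
  shows "\<pi>^k dvd (\<sigma> - \<alpha>)"
proof -
  define e where "e = eps u \<theta>"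
  obtain g where g: "g \<in> G u k" "mc k (mmul g (M2 0 (e*\<alpha>) e 0)) (mmul (M2 x (e*\<sigma>) e x) g)"
    using c unfolding conjugate_in_def e_def by blast
  obtain h where h: "mc k (mmul g h) mone" "mc k (mmul h g) mone" using g(1) unfolding G_def' by blast
  note ci = conj_inv[OF g(2) h]
  have "\<pi>^k dvd (- x - x)" using ci(1) by simp
  then have "\<pi>^k dvd (x + x)" by (rule neg_sum)
  moreover have "x + x = 2*x" by simp
  ultimately have "\<pi>^k dvd 2*x" by metis
  then have px: "\<pi>^k dvd x" by (rule dvd_cancel_2)
  have ci2: "\<pi>^k dvd ((0*0 - (e*\<alpha>)*e) - (x*x - (e*\<sigma>)*e))" using ci(2) by (simp only: det2.simps)
  have "\<pi>^k dvd e*(e*(\<sigma> - \<alpha>))"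
    by (rule dvd_from_eq[of _ "((0*0 - (e*\<alpha>)*e) - (x*x - (e*\<sigma>)*e)) + x*x"])
      (simp add: algebra_simps, intro dvd_add ci2 dvd_mult px)
  then have "\<pi>^k dvd e*(\<sigma> - \<alpha>)" unfolding e_def by (rule eps_cancel)
  then show ?thesis unfolding e_def by (rule eps_cancel)
qed

lemma dc_sub:
  assumes c1: "c1 \<in> stabS u Ov \<pi> gal l \<psi> A1" and c2: "c2 \<in> stabS u Ov \<pi> gal l \<psi> A2"
    and h: "mc l h (mmul (mmul c1 g) c2)"
  shows "double_coset u Ov \<pi> gal l (stabS u Ov \<pi> gal l \<psi> A1) h (stabS u Ov \<pi> gal l \<psi> A2)
      \<subseteq> double_coset u Ov \<pi> gal l (stabS u Ov \<pi> gal l \<psi> A1) g (stabS u Ov \<pi> gal l \<psi> A2)"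
proof
  fix m assume "m \<in> double_coset u Ov \<pi> gal l (stabS u Ov \<pi> gal l \<psi> A1) h (stabS u Ov \<pi> gal l \<psi> A2)"
  then obtain s1 s2 where m: "m \<in> G u l" "s1 \<in> stabS u Ov \<pi> gal l \<psi> A1" "s2 \<in> stabS u Ov \<pi> gal l \<psi> A2"
    "mc l m (mmul (mmul s1 h) s2)" unfolding double_coset_def by blast
  have "mc l m (mmul (mmul s1 h) s2)" by (rule m(4))
  also have "mc l \<dots> (mmul (mmul s1 (mmul (mmul c1 g) c2)) s2)" by (intro mcong_multR mcong_multL h)
  also have "mmul (mmul s1 (mmul (mmul c1 g) c2)) s2 = mmul (mmul (mmul s1 c1) g) (mmul c2 s2)" by (simp only: mmul_assoc)
  finally have "mc l m (mmul (mmul (mmul s1 c1) g) (mmul c2 s2))" .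
  moreover have "mmul s1 c1 \<in> stabS u Ov \<pi> gal l \<psi> A1" by (rule stab_mult[OF m(2) c1])
  moreover have "mmul c2 s2 \<in> stabS u Ov \<pi> gal l \<psi> A2" by (rule stab_mult[OF c2 m(3)])
  ultimately show "m \<in> double_coset u Ov \<pi> gal l (stabS u Ov \<pi> gal l \<psi> A1) g (stabS u Ov \<pi> gal l \<psi> A2)"
    unfolding double_coset_def using m(1) by blast
qed

lemma key_of_rel:
  assumes x: "x \<in> G u l" and g: "g \<in> G u l" and h: "h \<in> G u l" and k: "k \<le> l"
    and r: "mc k (mmul x (madd (M2 0 (e*a) e 0) (mmul (mmul g A2) (mi u l g))))
                  (mmul (madd (M2 0 (e*a) e 0) (mmul (mmul h A2) (mi u l h))) x)"
  shows "\<pi>^k dvd (mtrace (mmul (M2 0 (e*a) e 0) (mmul (mmul g A2) (mi u l g)))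
                 - mtrace (mmul (M2 0 (e*a) e 0) (mmul (mmul h A2) (mi u l h))))"
proof -
  let ?A = "M2 0 (e*a) e 0" and ?M = "mmul (mmul g A2) (mi u l g)" and ?N = "mmul (mmul h A2) (mi u l h)"
  have d1: "\<pi>^k dvd (det2 (madd ?A ?M) - det2 (madd ?A ?N))"
    using conj_inv(2)[OF r mcong_mono[OF k minv(2)[OF x]] mcong_mono[OF k minv(3)[OF x]]] .
  have dM: "\<pi>^k dvd (det2 A2 - det2 ?M)" using M_inv(2)[OF g] pow_dvd_mono[OF k] by blast
  have dN: "\<pi>^k dvd (det2 A2 - det2 ?N)" using M_inv(2)[OF h] pow_dvd_mono[OF k] by blast
  have trA: "mtrace ?A = 0" by simp
  have "\<pi>^k dvd ((det2 A2 - det2 ?M) - (det2 A2 - det2 ?N) + (det2 (madd ?A ?M) - det2 (madd ?A ?N)))"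
    by (rule dvd_add[OF dvd_diff[OF dM dN] d1])
  moreover have "(det2 A2 - det2 ?M) - (det2 A2 - det2 ?N) + (det2 (madd ?A ?M) - det2 (madd ?A ?N))
      = - (mtrace (mmul ?A ?M) - mtrace (mmul ?A ?N))"
    unfolding det_add trA by (simp add: algebra_simps)
  ultimately have "\<pi>^k dvd - (mtrace (mmul ?A ?M) - mtrace (mmul ?A ?N))" by simp
  then show ?thesis by (simp only: dvd_minus_iff)
qed

end

theorem theorem6p10:
  fixes Ov :: "'a::idom set" and \<pi> \<theta> :: 'a and gal :: "'a \<Rightarrow> 'a"
    and unitary :: bool and l :: nat and \<psi> :: "'a \<Rightarrow> complex"
    and \<alpha>1 \<alpha>2 \<alpha>t1 \<alpha>t2 :: 'a
  assumes std: "standing_setup Ov \<pi> \<theta> gal"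
    and l: "l \<ge> 2"
    and psi: "good_character unitary Ov \<pi> l \<psi>"
    and alpha: "\<alpha>1 \<in> Ov" "\<alpha>2 \<in> Ov"
    and A1g: "M2 0 (eps unitary \<theta> * \<alpha>1) (eps unitary \<theta>) 0 \<in> gset unitary Ov \<pi> gal (floor_half l)"
    and A2g: "M2 0 (eps unitary \<theta> * \<alpha>2) (eps unitary \<theta>) 0 \<in> gset unitary Ov \<pi> gal (floor_half l)"
    and cus: "tt_cus unitary Ov \<pi> \<theta> gal (floor_half l) (M2 0 (eps unitary \<theta> * \<alpha>1) (eps unitary \<theta>) 0)"
    and ss_sns: "tt_ss unitary Ov \<pi> \<theta> gal (floor_half l) (M2 0 (eps unitary \<theta> * \<alpha>2) (eps unitary \<theta>) 0)
              \<or> tt_sns unitary Ov \<pi> \<theta> gal (floor_half l) (M2 0 (eps unitary \<theta> * \<alpha>2) (eps unitary \<theta>) 0)"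
    and lifts: "\<alpha>t1 \<in> Ov" "\<alpha>t2 \<in> Ov" "\<pi>^(floor_half l) dvd (\<alpha>t1 - \<alpha>1)" "\<pi>^(floor_half l) dvd (\<alpha>t2 - \<alpha>2)"
    and At1g: "M2 0 (eps unitary \<theta> * \<alpha>t1) (eps unitary \<theta>) 0 \<in> gset unitary Ov \<pi> gal l"
    and At2g: "M2 0 (eps unitary \<theta> * \<alpha>t2) (eps unitary \<theta>) 0 \<in> gset unitary Ov \<pi> gal l"
  shows "\<forall>g \<in> Gset unitary Ov \<pi> gal l.
           card (Wset unitary Ov \<pi> gal l \<psi> (M2 0 (eps unitary \<theta> * \<alpha>t1) (eps unitary \<theta>) 0)
                   (M2 0 (eps unitary \<theta> * \<alpha>t2) (eps unitary \<theta>) 0) g) = 1"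
proof
  interpret stdset Ov \<pi> \<theta> gal by (rule stdset.intro[OF std])
  fix g assume g: "g \<in> Gset unitary Ov \<pi> gal l"
  show "card (Wset unitary Ov \<pi> gal l \<psi> (M2 0 (eps unitary \<theta> * \<alpha>t1) (eps unitary \<theta>) 0)
                   (M2 0 (eps unitary \<theta> * \<alpha>t2) (eps unitary \<theta>) 0) g) = 1"
  proof -
    define k where "k = floor_half l"
    define e where "e = eps unitary \<theta>"
    have k1: "1 \<le> k" "k \<le> l" using floor_half_bounds[OF l] unfolding k_def by auto
    obtain x \<sigma> where \<sigma>: "unit_mod Ov \<pi> \<sigma>" "if unitary then square_mod Ov \<pi> k \<sigma> else \<not> square_mod Ov \<pi> k \<sigma>"
      "conjugate_in unitary Ov \<pi> gal k (M2 0 (eps unitary \<theta> * \<alpha>1) (eps unitary \<theta>) 0) (M2 x (eps unitary \<theta> * \<sigma>) (eps unitary \<theta>) x)"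
      using cus unfolding tt_cus_def k_def by blast
    have "\<pi>^k dvd (\<sigma> - \<alpha>1)" by (rule conj_shape[OF \<sigma>(3)])
    then have a\<sigma>: "\<pi>^k dvd (\<alpha>t1 - \<sigma>)" using lifts(3) unfolding k_def[symmetric]
      by (metis cdiff diff_self diff_zero crefl ctrans csym)
    have \<sigma>O: "\<sigma> \<in> Ov" "\<not> \<pi> dvd \<sigma>" using \<sigma>(1) unfolding unit_mod_def by auto
    have na: "\<not> \<pi> dvd \<alpha>t1"
    proof
      assume "\<pi> dvd \<alpha>t1"
      moreover have "\<pi> dvd (\<alpha>t1 - \<sigma>)" using a\<sigma> pidvd[OF k1(1)] by blast
      ultimately have "\<pi> dvd (\<alpha>t1 - (\<alpha>t1 - \<sigma>))" by (rule dvd_diff)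
      then show False using \<sigma>O by simp
    qed
    have tyA1: "\<not> square_mod Ov \<pi> 1 \<alpha>t1" if nu: "\<not> unitary"
    proof -
      have "\<not> square_mod Ov \<pi> k \<alpha>t1" using sq_cong[OF _ a\<sigma>] \<sigma>(2) nu by auto
      then show ?thesis using nonsq_lift[OF lifts(1) na] by blast
    qed
    have tyA2: "square_mod Ov \<pi> 1 \<alpha>t1" if uu: "unitary"
    proof -
      have "square_mod Ov \<pi> k \<alpha>t1" using sq_cong[OF _ csym[OF a\<sigma>]] \<sigma>(2) uu by auto
      then show ?thesis using sq_mono[OF k1(1)] by blast
    qed
    have A2t: "\<pi> dvd \<alpha>t2 \<or> (\<not> \<pi> dvd \<alpha>t2 \<and> (\<not> unitary \<longrightarrow> square_mod Ov \<pi> 1 \<alpha>t2) \<and> (unitary \<longrightarrow> \<not> square_mod Ov \<pi> 1 \<alpha>t2))"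
      using ss_sns
    proof
      assume "tt_ss unitary Ov \<pi> \<theta> gal (floor_half l) (M2 0 (eps unitary \<theta> * \<alpha>2) (eps unitary \<theta>) 0)"
      then obtain y \<delta> where \<delta>: "unit_mod Ov \<pi> \<delta>" "if unitary then \<not> square_mod Ov \<pi> k \<delta> else square_mod Ov \<pi> k \<delta>"
        "conjugate_in unitary Ov \<pi> gal k (M2 0 (eps unitary \<theta> * \<alpha>2) (eps unitary \<theta>) 0) (M2 y (eps unitary \<theta> * \<delta>) (eps unitary \<theta>) y)"
        unfolding tt_ss_def k_def by blast
      have "\<pi>^k dvd (\<delta> - \<alpha>2)" by (rule conj_shape[OF \<delta>(3)])
      then have b\<delta>: "\<pi>^k dvd (\<alpha>t2 - \<delta>)" using lifts(4) unfolding k_def[symmetric]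
        by (metis cdiff diff_self diff_zero crefl ctrans csym)
      have \<delta>O: "\<delta> \<in> Ov" "\<not> \<pi> dvd \<delta>" using \<delta>(1) unfolding unit_mod_def by auto
      have nb: "\<not> \<pi> dvd \<alpha>t2"
      proof
        assume "\<pi> dvd \<alpha>t2"
        moreover have "\<pi> dvd (\<alpha>t2 - \<delta>)" using b\<delta> pidvd[OF k1(1)] by blast
        ultimately have "\<pi> dvd (\<alpha>t2 - (\<alpha>t2 - \<delta>))" by (rule dvd_diff)
        then show False using \<delta>O by simp
      qed
      have "\<not> unitary \<longrightarrow> square_mod Ov \<pi> 1 \<alpha>t2"
      proof
        assume nu: "\<not> unitary"
        have "square_mod Ov \<pi> k \<alpha>t2" using sq_cong[OF _ csym[OF b\<delta>]] \<delta>(2) nu by auto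
        then show "square_mod Ov \<pi> 1 \<alpha>t2" using sq_mono[OF k1(1)] by blast
      qed
      moreover have "unitary \<longrightarrow> \<not> square_mod Ov \<pi> 1 \<alpha>t2"
      proof
        assume uu: "unitary"
        have "\<not> square_mod Ov \<pi> k \<alpha>t2" using sq_cong[OF _ b\<delta>] \<delta>(2) uu by auto
        then show "\<not> square_mod Ov \<pi> 1 \<alpha>t2" using nonsq_lift[OF lifts(2) nb] by blast
      qed
      ultimately show ?thesis using nb by blast
    next
      assume "tt_sns unitary Ov \<pi> \<theta> gal (floor_half l) (M2 0 (eps unitary \<theta> * \<alpha>2) (eps unitary \<theta>) 0)"
      then obtain y \<beta> where \<beta>: "\<beta> \<in> Ov"
        "conjugate_in unitary Ov \<pi> gal k (M2 0 (eps unitary \<theta> * \<alpha>2) (eps unitary \<theta>) 0) (M2 y (eps unitary \<theta> * \<pi> * \<beta>) (eps unitary \<theta>) y)"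
        unfolding tt_sns_def k_def by blast
      have "\<pi>^k dvd (\<pi>*\<beta> - \<alpha>2)" by (rule conj_shape) (use \<beta>(2) in \<open>simp add: mult.assoc\<close>)
      then have p1: "\<pi> dvd (\<pi>*\<beta> - \<alpha>2)" using pidvd[OF k1(1)] by blast
      have p2: "\<pi> dvd (\<alpha>t2 - \<alpha>2)" using lifts(4) pidvd[OF k1(1)] unfolding k_def by blast
      have "\<pi> dvd ((\<alpha>t2 - \<alpha>2) - (\<pi>*\<beta> - \<alpha>2) + \<pi>*\<beta>)" by (rule dvd_add[OF dvd_diff[OF p2 p1] dvd_triv_left])
      then show ?thesis by simp
    qed
    let ?A1 = "M2 0 (eps unitary \<theta> * \<alpha>t1) (eps unitary \<theta>) 0" and ?A2 = "M2 0 (eps unitary \<theta> * \<alpha>t2) (eps unitary \<theta>) 0"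
    let ?S1 = "stabS unitary Ov \<pi> gal l \<psi> ?A1" and ?S2 = "stabS unitary Ov \<pi> gal l \<psi> ?A2"
    let ?DC = "\<lambda>h. double_coset unitary Ov \<pi> gal l ?S1 h ?S2"
    let ?Mf = "\<lambda>x. madd ?A1 (mmul (mmul x ?A2) (minv unitary Ov \<pi> l x))"
    have gG: "g \<in> G unitary l" using g by simp
    have eqs: "?DC h = ?DC g" if hh: "h \<in> G unitary l" and xx: "\<exists>x\<in>G unitary l. mc k (mmul x (?Mf g)) (mmul (?Mf h) x)" for h
    proof -
      obtain x where x: "x \<in> G unitary l" "mc k (mmul x (?Mf g)) (mmul (?Mf h) x)" using xx by blast
      have key1: "\<pi>^k dvd (mtrace (mmul ?A1 (mmul (mmul g ?A2) (mi unitary l g))) - mtrace (mmul ?A1 (mmul (mmul h ?A2) (mi unitary l h))))"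
        by (rule key_of_rel[OF x(1) gG hh k1(2) x(2)])
      note key2 = csym[OF key1]
      obtain c1 c2 where c: "c1 \<in> G unitary l" "mc k (mmul c1 ?A1) (mmul ?A1 c1)" "c2 \<in> G unitary l"
        "mc k (mmul c2 ?A2) (mmul ?A2 c2)" "mc l h (mmul (mmul c1 g) c2)"
        using core[OF l k_def lifts(1) na lifts(2) tyA1 tyA2 A2t gG hh key1] by blast
      obtain d1 d2 where d: "d1 \<in> G unitary l" "mc k (mmul d1 ?A1) (mmul ?A1 d1)" "d2 \<in> G unitary l"
        "mc k (mmul d2 ?A2) (mmul ?A2 d2)" "mc l g (mmul (mmul d1 h) d2)"
        using core[OF l k_def lifts(1) na lifts(2) tyA1 tyA2 A2t hh gG key2] by blast
      have S: "c1 \<in> ?S1" "c2 \<in> ?S2" "d1 \<in> ?S1" "d2 \<in> ?S2"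
        using cent_stab[OF psi A_ent[OF lifts(1)] c(1) c(2)[unfolded k_def]]
          cent_stab[OF psi A_ent[OF lifts(2)] c(3) c(4)[unfolded k_def]]
          cent_stab[OF psi A_ent[OF lifts(1)] d(1) d(2)[unfolded k_def]]
          cent_stab[OF psi A_ent[OF lifts(2)] d(3) d(4)[unfolded k_def]] by auto
      show ?thesis using dc_sub[OF S(1,2) c(5)] dc_sub[OF S(3,4) d(5)] by blast
    qed
    have gin: "?DC g \<in> {?DC h | h. h \<in> G unitary l \<and> (\<exists>x\<in>G unitary l. mc k (mmul x (?Mf g)) (mmul (?Mf h) x))}"
    proof -
      have "mc k (mmul mone (?Mf g)) (mmul (?Mf g) mone)" by simp
      then have "g \<in> G unitary l \<and> (\<exists>x\<in>G unitary l. mc k (mmul x (?Mf g)) (mmul (?Mf g) x))"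
        using gG G_one by blast
      then show ?thesis by blast
    qed
    have "{?DC h | h. h \<in> G unitary l \<and> (\<exists>x\<in>G unitary l. mc k (mmul x (?Mf g)) (mmul (?Mf h) x))} = {?DC g}"
      using eqs gin by blast
    then show ?thesis unfolding Wset_def Let_def k_def by simp
  qed
qed


end
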